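(* Let $\Omega\subset\mathbb{C}$ be a bounded domain and $D=(\mu,\mathcal{A},\mathcal{B},\mathcal{F})\in\mathcal{BV}(\Omega)$ with $\mu\in C^{1,\alpha}$ for some $\alpha\in(0,1)$ and $\|\mu\|_\infty<1$. Let $\Phi:\Omega\to\Omega'$ be a $C^{2,\alpha}$ diffeomorphism solving $\Phi_{\bar z}=\mu\Phi_z$, with $\Omega'=\Phi(\Omega)$ bounded, and with $\mathcal{A}':=\overline{\Psi_\zeta}(\mathcal{A}\circ\Psi)$ H\"older continuous on $\overline{\Omega'}$, where $\Psi=\Phi^{-1}$. Then $D$ is gauge-diffeomorphism equivalent to a datum of the form $(0,0,\tilde{\mathcal{B}},\tilde{\mathcal{F}})\in\mathcal{BV}(\Omega')$, i.e. to a Vekua equation $w_{\bar\zeta}+\tilde{\mathcal{B}}\bar w=\tilde{\mathcal{F}}$ on $\Omega'$ with no $w$-coupling.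
   Context: A domain is an open connected subset of $\mathbb{C}$. $\mathcal{BV}(\Omega)$ is the set of quadruples $(\mu,\mathcal{A},\mathcal{B},\mathcal{F})$ of continuous complex functions on $\Omega$ with $|\mu|<1$ pointwise, encoding $w_{\bar z}-\mu w_z+\mathcal{A}w+\mathcal{B}\bar w=\mathcal{F}$. Gauge action: for a $C^1$ nowhere-vanishing $\phi$ on $\Omega$, $\phi\cdot(\mu,\mathcal{A},\mathcal{B},\mathcal{F})=(\mu,\ \mathcal{A}-\phi_{\bar z}/\phi+\mu\phi_z/\phi,\ \mathcal{B}\phi/\bar\phi,\ \phi\mathcal{F})$; $D_1\sim_g D_2$ iff $\phi\cdot D_1=D_2$ for some such $\phi$. Diffeomorphism action: for a $C^1$ bijection $\Phi:\Omega_1\to\Omega_2$ with $C^1$ inverse and $J=|\Phi_z|^2-|\Phi_{\bar z}|^2>0$, and $D\in\mathcal{BV}(\Omega_2)$, set $K=\Phi_z+(\mu\circ\Phi)\overline{\Phi_{\bar z}}$ and $\Phi^*D=((\Phi_{\bar z}+(\mu\circ\Phi)\overline{\Phi_z})/K,\ J(\mathcal{A}\circ\Phi)/K,\ J(\mathcal{B}\circ\Phi)/K,\ J(\mathcal{F}\circ\Phi)/K)$; $D_1\sim_d D_2$ iff $D_1=\Phi^*D_2$. Gauge-diffeomorphism equivalence $\sim$ is the equivalence relation generated by $\sim_g$ and $\sim_d$ (finite chains of such steps). *)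

theory Defs
  imports "HOL-Analysis.Analysis"
begin

definition domain :: "complex set \<Rightarrow> bool" where
  "domain S \<longleftrightarrow> open S \<and> connected S \<and> S \<noteq> {}"

definition dx :: "(complex \<Rightarrow> complex) \<Rightarrow> complex \<Rightarrow> complex" where
  "dx f z = frechet_derivative f (at z) 1"
definition dy :: "(complex \<Rightarrow> complex) \<Rightarrow> complex \<Rightarrow> complex" where
  "dy f z = frechet_derivative f (at z) \<i>"
definition dz :: "(complex \<Rightarrow> complex) \<Rightarrow> complex \<Rightarrow> complex" where
  "dz f z = (dx f z - \<i> * dy f z) / 2"
definition dzbar :: "(complex \<Rightarrow> complex) \<Rightarrow> complex \<Rightarrow> complex" where
  "dzbar f z = (dx f z + \<i> * dy f z) / 2"

definition C1_on :: "complex set \<Rightarrow> (complex \<Rightarrow> complex) \<Rightarrow> bool" where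
  "C1_on S f \<longleftrightarrow> (\<forall>z\<in>S. f differentiable (at z)) \<and>
     continuous_on S (dx f) \<and> continuous_on S (dy f)"

definition C2_on :: "complex set \<Rightarrow> (complex \<Rightarrow> complex) \<Rightarrow> bool" where
  "C2_on S f \<longleftrightarrow> C1_on S f \<and> C1_on S (dx f) \<and> C1_on S (dy f)"

definition holder_on :: "real \<Rightarrow> complex set \<Rightarrow> (complex \<Rightarrow> complex) \<Rightarrow> bool" where
  "holder_on a S f \<longleftrightarrow> (\<exists>C. \<forall>x\<in>S. \<forall>y\<in>S. cmod (f x - f y) \<le> C * cmod (x - y) powr a)"

definition C1a_on :: "real \<Rightarrow> complex set \<Rightarrow> (complex \<Rightarrow> complex) \<Rightarrow> bool" where
  "C1a_on a S f \<longleftrightarrow> C1_on S f \<and> holder_on a S (dx f) \<and> holder_on a S (dy f)"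

definition C2a_on :: "real \<Rightarrow> complex set \<Rightarrow> (complex \<Rightarrow> complex) \<Rightarrow> bool" where
  "C2a_on a S f \<longleftrightarrow> C2_on S f \<and>
     holder_on a S (dx (dx f)) \<and> holder_on a S (dy (dx f)) \<and>
     holder_on a S (dx (dy f)) \<and> holder_on a S (dy (dy f))"

type_synonym datum =
  "(complex \<Rightarrow> complex) \<times> (complex \<Rightarrow> complex) \<times> (complex \<Rightarrow> complex) \<times> (complex \<Rightarrow> complex)"

definition BV :: "complex set \<Rightarrow> datum \<Rightarrow> bool" where
  "BV S D \<longleftrightarrow> (case D of (\<mu>, A, B, F) \<Rightarrow>
     continuous_on S \<mu> \<and> continuous_on S A \<and> continuous_on S B \<and> continuous_on S F \<and>
     (\<forall>z\<in>S. cmod (\<mu> z) < 1))"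

definition eq_on :: "complex set \<Rightarrow> datum \<Rightarrow> datum \<Rightarrow> bool" where
  "eq_on S D1 D2 \<longleftrightarrow> (case D1 of (\<mu>1, A1, B1, F1) \<Rightarrow> case D2 of (\<mu>2, A2, B2, F2) \<Rightarrow>
     (\<forall>z\<in>S. \<mu>1 z = \<mu>2 z \<and> A1 z = A2 z \<and> B1 z = B2 z \<and> F1 z = F2 z))"

definition gauge_act :: "(complex \<Rightarrow> complex) \<Rightarrow> datum \<Rightarrow> datum" where
  "gauge_act \<phi> D = (case D of (\<mu>, A, B, F) \<Rightarrow>
     (\<mu>, \<lambda>z. A z - dzbar \<phi> z / \<phi> z + \<mu> z * dz \<phi> z / \<phi> z,
      \<lambda>z. B z * \<phi> z / cnj (\<phi> z), \<lambda>z. \<phi> z * F z))"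

definition gauge_rel :: "complex set \<Rightarrow> datum \<Rightarrow> datum \<Rightarrow> bool" where
  "gauge_rel S D1 D2 \<longleftrightarrow>
     (\<exists>\<phi>. C1_on S \<phi> \<and> (\<forall>z\<in>S. \<phi> z \<noteq> 0) \<and> eq_on S (gauge_act \<phi> D1) D2)"

definition jac :: "(complex \<Rightarrow> complex) \<Rightarrow> complex \<Rightarrow> real" where
  "jac \<Phi> z = (cmod (dz \<Phi> z))\<^sup>2 - (cmod (dzbar \<Phi> z))\<^sup>2"

definition pullback :: "(complex \<Rightarrow> complex) \<Rightarrow> datum \<Rightarrow> datum" where
  "pullback \<Phi> D = (case D of (\<mu>, A, B, F) \<Rightarrow>
     (let K = (\<lambda>z. dz \<Phi> z + \<mu> (\<Phi> z) * cnj (dzbar \<Phi> z)) in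
      (\<lambda>z. (dzbar \<Phi> z + \<mu> (\<Phi> z) * cnj (dz \<Phi> z)) / K z,
       \<lambda>z. of_real (jac \<Phi> z) * A (\<Phi> z) / K z,
       \<lambda>z. of_real (jac \<Phi> z) * B (\<Phi> z) / K z,
       \<lambda>z. of_real (jac \<Phi> z) * F (\<Phi> z) / K z)))"

definition admissible_diffeo :: "complex set \<Rightarrow> complex set \<Rightarrow> (complex \<Rightarrow> complex) \<Rightarrow> bool" where
  "admissible_diffeo S1 S2 \<Phi> \<longleftrightarrow> bij_betw \<Phi> S1 S2 \<and> C1_on S1 \<Phi> \<and>
     C1_on S2 (inv_into S1 \<Phi>) \<and> (\<forall>z\<in>S1. jac \<Phi> z > 0)"

definition diff_rel :: "complex set \<Rightarrow> datum \<Rightarrow> complex set \<Rightarrow> datum \<Rightarrow> bool" where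
  "diff_rel S1 D1 S2 D2 \<longleftrightarrow>
     (\<exists>\<Phi>. admissible_diffeo S1 S2 \<Phi> \<and> eq_on S1 D1 (pullback \<Phi> D2))"

definition gd_step :: "complex set \<times> datum \<Rightarrow> complex set \<times> datum \<Rightarrow> bool" where
  "gd_step P1 P2 \<longleftrightarrow> (case P1 of (S1, D1) \<Rightarrow> case P2 of (S2, D2) \<Rightarrow>
     domain S1 \<and> domain S2 \<and> BV S1 D1 \<and> BV S2 D2 \<and>
     ((S1 = S2 \<and> gauge_rel S1 D1 D2) \<or> diff_rel S1 D1 S2 D2))"

definition gd_equiv :: "complex set \<times> datum \<Rightarrow> complex set \<times> datum \<Rightarrow> bool" where
  "gd_equiv = equivclp gd_step"

end

theory Submission
  imports Defs
begin

definition hh :: "real \<Rightarrow> real \<Rightarrow> real" where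
  "hh e s = 1 / max s (e\<^sup>2) + max (e\<^sup>2 - s) 0 / e^4"
definition hdr :: "real \<Rightarrow> real \<Rightarrow> real" where
  "hdr e s = - 1 / (max s (e\<^sup>2))\<^sup>2"

lemma hh_deriv:
  assumes e: "e > 0"
  shows "(hh e has_real_derivative hdr e s) (at s)"
proof -
  have e2: "e\<^sup>2 > 0" using e by simp
  consider "s > e\<^sup>2" | "s < e\<^sup>2" | "s = e\<^sup>2" by linarith
  then show ?thesis
  proof cases
    case 1
    have ev: "eventually (\<lambda>x. hh e x = 1 / x) (nhds s)"
      using eventually_nhds_in_open[of "{e\<^sup>2<..}" s] 1
      by (auto simp: hh_def elim!: eventually_mono)
    have "((\<lambda>x. 1 / x) has_real_derivative - 1 / s\<^sup>2) (at s)"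
      using 1 e2 by (auto intro!: derivative_eq_intros simp: power2_eq_square field_simps)
    then show ?thesis
      using 1 by (subst DERIV_cong_ev[OF refl ev]) (auto simp: hdr_def)
  next
    case 2
    have ev: "eventually (\<lambda>x. hh e x = 1 / e\<^sup>2 + (e\<^sup>2 - x) / e^4) (nhds s)"
      using eventually_nhds_in_open[of "{..<e\<^sup>2}" s] 2
      by (auto simp: hh_def elim!: eventually_mono)
    have "((\<lambda>x. 1 / e\<^sup>2 + (e\<^sup>2 - x) / e^4) has_real_derivative - 1 / e^4) (at s)"
      using e2 by (auto intro!: derivative_eq_intros) (simp add: divide_simps)
    then show ?thesis
      using 2 by (subst DERIV_cong_ev[OF refl ev]) (auto simp: hdr_def power2_eq_square power4_eq_xxxx)
  next
    case 3
    have hds: "hdr e s = - 1 / e^4" using 3 by (simp add: hdr_def power2_eq_square power4_eq_xxxx)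
    have R: "((\<lambda>h. (hh e (s + h) - hh e s) / h) \<longlongrightarrow> - 1 / e^4) (at_right 0)"
    proof -
      have "((\<lambda>h. - 1 / (e\<^sup>2 * (e\<^sup>2 + h))) \<longlongrightarrow> - 1 / (e\<^sup>2 * (e\<^sup>2 + 0))) (at_right 0)"
        using e2 by (intro tendsto_intros) auto
      then have L: "((\<lambda>h. - 1 / (e\<^sup>2 * (e\<^sup>2 + h))) \<longlongrightarrow> - 1 / e^4) (at_right 0)"
        by (simp add: power2_eq_square power4_eq_xxxx mult.assoc)
      have "eventually (\<lambda>h. - 1 / (e\<^sup>2 * (e\<^sup>2 + h)) = (hh e (s + h) - hh e s) / h) (at_right 0)"
        unfolding eventually_at_right_field
      proof (rule exI[of _ 1], safe)
        fix h :: real assume h: "0 < h"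
        have a: "hh e (s + h) = 1 / (e\<^sup>2 + h)" using h 3 by (simp add: hh_def)
        have b: "hh e s = 1 / e\<^sup>2" using 3 by (simp add: hh_def)
        have gen: "\<And>t. t > 0 \<Longrightarrow> 1 / (t + h) - 1 / t = - h / (t * (t + h))"
          using h by (simp add: field_simps)
        have "1 / (e\<^sup>2 + h) - 1 / e\<^sup>2 = - h / (e\<^sup>2 * (e\<^sup>2 + h))"
          using gen[OF e2] .
        then show "- 1 / (e\<^sup>2 * (e\<^sup>2 + h)) = (hh e (s + h) - hh e s) / h"
          unfolding a b using h by simp
      qed simp
      then show ?thesis using L by (rule Lim_transform_eventually[rotated])
    qed
    have Lf: "((\<lambda>h. (hh e (s + h) - hh e s) / h) \<longlongrightarrow> - 1 / e^4) (at_left 0)"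
    proof -
      have "eventually (\<lambda>h. - 1 / e^4 = (hh e (s + h) - hh e s) / h) (at_left 0)"
        unfolding eventually_at_left_field
        apply (rule exI[of _ "-1"]) using e2 3
        by (auto simp: hh_def field_simps)
      then show ?thesis by (rule Lim_transform_eventually[rotated]) simp
    qed
    show ?thesis unfolding DERIV_def hds using R Lf by (simp add: filterlim_at_split)
  qed
qed

definition KK :: "real \<Rightarrow> complex \<Rightarrow> complex" where
  "KK e w = cnj w * of_real (hh e ((cmod w)\<^sup>2))"
definition kk :: "real \<Rightarrow> complex \<Rightarrow> complex" where
  "kk e w = (cnj w)\<^sup>2 * of_real (hdr e ((cmod w)\<^sup>2))"
definition pp :: "real \<Rightarrow> complex \<Rightarrow> real" where
  "pp e w = hh e ((cmod w)\<^sup>2) + (cmod w)\<^sup>2 * hdr e ((cmod w)\<^sup>2)"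

lemma nsq_deriv: "((\<lambda>w. (cmod w)\<^sup>2) has_derivative (\<lambda>v. 2 * (Re w * Re v + Im w * Im v))) (at w)"
proof -
  have "((\<lambda>w. (Re w)\<^sup>2 + (Im w)\<^sup>2) has_derivative (\<lambda>v. 2 * (Re w * Re v + Im w * Im v))) (at w)"
    by (auto intro!: derivative_eq_intros simp: algebra_simps)
  then show ?thesis by (simp add: cmod_power2)
qed

lemma KK_deriv:
  assumes e: "e > 0"
  shows "(KK e has_derivative (\<lambda>v. kk e w * v + of_real (pp e w) * cnj v)) (at w)"
proof -
  have d2: "((\<lambda>w. hh e ((cmod w)\<^sup>2)) has_derivative
      (\<lambda>v. 2 * (Re w * Re v + Im w * Im v) * hdr e ((cmod w)\<^sup>2))) (at w)"
    by (rule DERIV_compose_FDERIV[OF hh_deriv[OF e] nsq_deriv])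
  have d3: "((\<lambda>w. of_real (hh e ((cmod w)\<^sup>2)) :: complex) has_derivative
      (\<lambda>v. of_real (2 * (Re w * Re v + Im w * Im v) * hdr e ((cmod w)\<^sup>2)))) (at w)"
    using has_derivative_of_real[OF d2] .
  have d4: "(KK e has_derivative (\<lambda>v. cnj w * of_real (2 * (Re w * Re v + Im w * Im v) * hdr e ((cmod w)\<^sup>2))
      + cnj v * of_real (hh e ((cmod w)\<^sup>2)))) (at w)"
    unfolding KK_def
    using has_derivative_mult[OF has_derivative_cnj[OF has_derivative_ident] d3] by simp
  have gen: "cnj w * of_real (2 * (Re w * Re v + Im w * Im v) * H) + cnj v * of_real G
      = (cnj w)\<^sup>2 * of_real H * v + of_real (G + ((Re w)\<^sup>2 + (Im w)\<^sup>2) * H) * cnj v" for H G v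
    by (simp add: complex_eq_iff power2_eq_square algebra_simps)
  have eq: "(\<lambda>v. cnj w * of_real (2 * (Re w * Re v + Im w * Im v) * hdr e ((cmod w)\<^sup>2))
      + cnj v * of_real (hh e ((cmod w)\<^sup>2))) = (\<lambda>v. kk e w * v + of_real (pp e w) * cnj v)"
    by (rule ext) (simp only: gen kk_def pp_def cmod_power2[symmetric])
  show ?thesis using d4 unfolding eq .
qed

lemma hh_ge: "e > 0 \<Longrightarrow> e\<^sup>2 \<le> s \<Longrightarrow> hh e s = 1 / s"
  by (simp add: hh_def)
lemma hh_lt: "e > 0 \<Longrightarrow> s < e\<^sup>2 \<Longrightarrow> hh e s = (2 * e\<^sup>2 - s) / e^4"
proof -
  assume e: "e > 0" and s: "s < e\<^sup>2"
  have "hh e s = 1 / e\<^sup>2 + (e\<^sup>2 - s) / e^4" using s by (simp add: hh_def)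
  also have "\<dots> = (2 * e\<^sup>2 - s) / e^4" using e by (simp add: field_simps power2_eq_square power4_eq_xxxx)
  finally show ?thesis .
qed
lemma hdr_ge: "e\<^sup>2 \<le> s \<Longrightarrow> hdr e s = - 1 / s\<^sup>2"
  by (simp add: hdr_def)
lemma hdr_lt: "s < e\<^sup>2 \<Longrightarrow> hdr e s = - 1 / e^4"
  by (simp add: hdr_def power2_eq_square power4_eq_xxxx)

lemma pp_out: "e > 0 \<Longrightarrow> e \<le> cmod w \<Longrightarrow> pp e w = 0"
proof -
  assume e: "e > 0" and w: "e \<le> cmod w"
  have s: "e\<^sup>2 \<le> (cmod w)\<^sup>2" using e w by (simp add: power_mono)
  have "cmod w > 0" using e w by linarith
  then have n: "(cmod w)\<^sup>2 > 0" by simp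
  have gen: "\<And>n::real. n > 0 \<Longrightarrow> 1 / n + n * (- 1 / n\<^sup>2) = 0"
    by (simp add: field_simps power2_eq_square)
  show ?thesis unfolding pp_def hh_ge[OF e s] hdr_ge[OF s] using gen[OF n] .
qed

lemma pp_in: "e > 0 \<Longrightarrow> cmod w < e \<Longrightarrow> pp e w = 2 * (e\<^sup>2 - (cmod w)\<^sup>2) / e^4"
proof -
  assume e: "e > 0" and w: "cmod w < e"
  have "(cmod w)\<^sup>2 < e\<^sup>2" using e w by (simp add: power_strict_mono)
  then show ?thesis using e by (simp add: pp_def hh_lt hdr_lt field_simps)
qed

lemma pp_nonneg: "e > 0 \<Longrightarrow> 0 \<le> pp e w"
  by (cases "cmod w < e") (auto simp: pp_in pp_out power_mono)

lemma pp_le: "e > 0 \<Longrightarrow> pp e w \<le> 2 / e\<^sup>2"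
proof (cases "cmod w < e")
  case True
  assume e: "e > 0"
  have "2 * (e\<^sup>2 - (cmod w)\<^sup>2) / e^4 \<le> 2 * e\<^sup>2 / e^4"
    using e by (intro divide_right_mono) auto
  also have "\<dots> = 2 / e\<^sup>2" using e by (simp add: field_simps power2_eq_square power4_eq_xxxx)
  finally show ?thesis using True e by (simp add: pp_in)
qed (auto simp: pp_out)

lemma kk_norm: "e > 0 \<Longrightarrow> cmod (kk e w) \<le> 1 / e\<^sup>2"
proof -
  assume e: "e > 0"
  let ?m = "max ((cmod w)\<^sup>2) (e\<^sup>2)"
  have m: "?m > 0" "(cmod w)\<^sup>2 \<le> ?m" "e\<^sup>2 \<le> ?m" using e by (auto simp: less_max_iff_disj)
  have "cmod (kk e w) = (cmod w)\<^sup>2 * \<bar>hdr e ((cmod w)\<^sup>2)\<bar>"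
    by (simp only: kk_def norm_mult norm_power complex_mod_cnj norm_of_real)
  also have "\<dots> = (cmod w)\<^sup>2 / ?m\<^sup>2"
    by (simp add: hdr_def)
  also have "\<dots> \<le> ?m / ?m\<^sup>2" using m by (intro divide_right_mono) auto
  also have "\<dots> = 1 / ?m" using m by (simp add: power2_eq_square)
  also have "\<dots> \<le> 1 / e\<^sup>2" using m e by (intro divide_left_mono) auto
  finally show ?thesis .
qed

lemma kk_out: "e > 0 \<Longrightarrow> e \<le> cmod w \<Longrightarrow> kk e w = (cnj w)\<^sup>2 * of_real (- 1 / ((cmod w)\<^sup>2)\<^sup>2)"
proof -
  assume e: "e > 0" and w: "e \<le> cmod w"
  have "e\<^sup>2 \<le> (cmod w)\<^sup>2" using e w by (simp add: power_mono)
  then show ?thesis by (simp only: kk_def hdr_ge)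
qed

lemma KK_norm: "e > 0 \<Longrightarrow> cmod (KK e w) \<le> 2 / e"
proof (cases "cmod w < e")
  case True
  assume e: "e > 0"
  have s: "(cmod w)\<^sup>2 < e\<^sup>2" using e True by (simp add: power_strict_mono)
  have s2: "0 \<le> 2 * e\<^sup>2 - (cmod w)\<^sup>2" using s zero_le_power2[of e] by linarith
  have q: "0 \<le> (2 * e\<^sup>2 - (cmod w)\<^sup>2) / e^4" using s2 e by simp
  have "cmod (KK e w) = cmod (cnj w) * cmod (of_real (hh e ((cmod w)\<^sup>2)) :: complex)"
    by (simp only: KK_def norm_mult)
  also have "\<dots> = cmod w * \<bar>(2 * e\<^sup>2 - (cmod w)\<^sup>2) / e^4\<bar>"
    by (simp only: norm_of_real complex_mod_cnj hh_lt[OF e s])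
  also have "\<dots> = cmod w * ((2 * e\<^sup>2 - (cmod w)\<^sup>2) / e^4)"
    by (simp only: abs_of_nonneg[OF q])
  also have "\<dots> \<le> e * (2 * e\<^sup>2 / e^4)"
    using True e q by (intro mult_mono divide_right_mono) auto
  also have "\<dots> = 2 / e" using e by (simp add: field_simps power2_eq_square power4_eq_xxxx)
  finally show ?thesis .
next
  case False
  assume e: "e > 0"
  have w: "e \<le> cmod w" "cmod w > 0" using False e by auto
  have "e\<^sup>2 \<le> (cmod w)\<^sup>2" using e w by (simp add: power_mono)
  then have hq: "hh e ((cmod w)\<^sup>2) = 1 / (cmod w)\<^sup>2" by (rule hh_ge[OF e])
  have "cmod (KK e w) = cmod w * (1 / (cmod w)\<^sup>2)"
    unfolding KK_def norm_mult hq complex_mod_cnj norm_of_real by simp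
  also have "\<dots> = 1 / cmod w" using w by (simp add: power2_eq_square)
  finally have "cmod (KK e w) = 1 / cmod w" .
  also have "\<dots> \<le> 1 / e" using w e by (intro divide_left_mono) auto
  also have "\<dots> \<le> 2 / e" using e by (simp add: divide_right_mono)
  finally show ?thesis .
qed

lemma KK_out: "e > 0 \<Longrightarrow> e \<le> cmod w \<Longrightarrow> KK e w = cnj w * of_real (1 / (cmod w)\<^sup>2)"
proof -
  assume e: "e > 0" and w: "e \<le> cmod w"
  have "e\<^sup>2 \<le> (cmod w)\<^sup>2" using e w by (simp add: power_mono)
  then show ?thesis by (simp only: KK_def hh_ge[OF e])
qed

lemma kk_rot: "kk e (\<i> * w) = - kk e w"
  by (simp add: kk_def norm_mult power_mult_distrib)

lemma continuous_hh: "e > 0 \<Longrightarrow> continuous_on UNIV (hh e)"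
  unfolding hh_def by (intro continuous_intros) (auto simp: max_def)
lemma continuous_hdr: "e > 0 \<Longrightarrow> continuous_on UNIV (hdr e)"
  unfolding hdr_def by (intro continuous_intros) (auto simp: max_def)

lemma continuous_kk: "e > 0 \<Longrightarrow> continuous_on UNIV (kk e)"
  unfolding kk_def
  by (intro continuous_intros continuous_on_compose2[OF continuous_hdr]) auto
lemma continuous_pp: "e > 0 \<Longrightarrow> continuous_on UNIV (pp e)"
  unfolding pp_def
  by (intro continuous_intros continuous_on_compose2[OF continuous_hdr]
      continuous_on_compose2[OF continuous_hh]) auto
lemma continuous_KK: "e > 0 \<Longrightarrow> continuous_on UNIV (KK e)"
  unfolding KK_def
  by (intro continuous_intros continuous_on_compose2[OF continuous_hh]) auto

definition sq :: "complex \<Rightarrow> real \<Rightarrow> complex set" where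
  "sq c r = cbox (c - of_real r * (1 + \<i>)) (c + of_real r * (1 + \<i>))"

lemma mem_sq: "w \<in> sq c r \<longleftrightarrow> \<bar>Re w - Re c\<bar> \<le> r \<and> \<bar>Im w - Im c\<bar> \<le> r"
  unfolding sq_def in_cbox_complex_iff by auto

lemma content_cbox_complex:
  "Henstock_Kurzweil_Integration.content (cbox a b) = (if Re a \<le> Re b \<and> Im a \<le> Im b then (Re b - Re a) * (Im b - Im a) else 0)"
  unfolding content_cbox_cases by (simp add: Basis_complex_def)

lemma content_sq: "r \<ge> 0 \<Longrightarrow> Henstock_Kurzweil_Integration.content (sq c r) = 4 * r\<^sup>2"
  unfolding sq_def content_cbox_complex by (simp add: power2_eq_square)

lemma ball_sub_sq: "ball c r \<subseteq> sq c r"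
proof
  fix w assume "w \<in> ball c r"
  then have "cmod (w - c) < r" by (simp add: dist_norm norm_minus_commute)
  moreover have "\<bar>Re (w - c)\<bar> \<le> cmod (w - c)" "\<bar>Im (w - c)\<bar> \<le> cmod (w - c)"
    by (rule abs_Re_le_cmod, rule abs_Im_le_cmod)
  ultimately show "w \<in> sq c r" unfolding mem_sq by auto
qed

lemma sq_shift: "sq z r = cbox (- (of_real r * (1 + \<i>)) + z) (of_real r * (1 + \<i>) + z)"
  unfolding sq_def by (simp add: algebra_simps)

lemma sq0: "sq 0 r = cbox (- (of_real r * (1 + \<i>))) (of_real r * (1 + \<i>))"
  unfolding sq_def by simp

lemma integral_shift_sq:
  fixes f :: "complex \<Rightarrow> complex"
  assumes "continuous_on UNIV f"
  shows "integral (sq z r) (\<lambda>\<zeta>. f (\<zeta> - z)) = integral (sq 0 r) f"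
proof -
  have "f integrable_on sq 0 r" unfolding sq_def
    by (rule integrable_continuous, rule continuous_on_subset[OF assms], simp)
  then have i: "(f has_integral integral (sq 0 r) f) (sq 0 r)"
    by (rule integrable_integral)
  have "(((\<lambda>\<zeta>. f (\<zeta> - z)) \<circ> (+) z) has_integral integral (sq 0 r) f)
     (cbox (- (of_real r * (1 + \<i>))) (of_real r * (1 + \<i>)))"
    using i by (simp add: o_def sq0)
  then have "((\<lambda>\<zeta>. f (\<zeta> - z)) has_integral integral (sq 0 r) f)
     (cbox (- (of_real r * (1 + \<i>)) + z) (of_real r * (1 + \<i>) + z))"
    by (rule has_integral_shift_cbox_iff[THEN iffD1])
  then have "((\<lambda>\<zeta>. f (\<zeta> - z)) has_integral integral (sq 0 r) f) (sq z r)"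
    unfolding sq_shift .
  then show ?thesis by (rule integral_unique)
qed

lemma image_mult_i_cbox:
  "(\<lambda>x. \<i> * x) ` cbox u v = cbox (Complex (- Im v) (Re u)) (Complex (- Im u) (Re v))"
proof (rule set_eqI, rule iffI)
  fix z assume "z \<in> (\<lambda>x. \<i> * x) ` cbox u v"
  then show "z \<in> cbox (Complex (- Im v) (Re u)) (Complex (- Im u) (Re v))"
    by (auto simp: in_cbox_complex_iff)
next
  fix z assume z: "z \<in> cbox (Complex (- Im v) (Re u)) (Complex (- Im u) (Re v))"
  have "- \<i> * z \<in> cbox u v" using z by (auto simp: in_cbox_complex_iff)
  moreover have "z = \<i> * (- \<i> * z)" by simp
  ultimately show "z \<in> (\<lambda>x. \<i> * x) ` cbox u v" by blast
qed

lemma image_mult_mi_cbox: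
  "(\<lambda>x. - \<i> * x) ` cbox u v = cbox (Complex (Im u) (- Re v)) (Complex (Im v) (- Re u))"
proof (rule set_eqI, rule iffI)
  fix z assume "z \<in> (\<lambda>x. - \<i> * x) ` cbox u v"
  then show "z \<in> cbox (Complex (Im u) (- Re v)) (Complex (Im v) (- Re u))"
    by (auto simp: in_cbox_complex_iff)
next
  fix z assume z: "z \<in> cbox (Complex (Im u) (- Re v)) (Complex (Im v) (- Re u))"
  have "\<i> * z \<in> cbox u v" using z by (auto simp: in_cbox_complex_iff)
  moreover have "z = - \<i> * (\<i> * z)" by simp
  ultimately show "z \<in> (\<lambda>x. - \<i> * x) ` cbox u v" by blast
qed

lemma rot_integral_zero:
  fixes d :: "complex \<Rightarrow> complex"
  assumes cont: "continuous_on UNIV d" and odd: "\<And>w. d (\<i> * w) = - d w" and r: "r \<ge> 0"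
  shows "integral (sq 0 r) d = 0"
proof -
  let ?I = "integral (sq 0 r) d"
  have "d integrable_on sq 0 r" unfolding sq_def
    by (rule integrable_continuous, rule continuous_on_subset[OF cont], simp)
  then have i: "(d has_integral ?I) (sq 0 r)"
    by (rule integrable_integral)
  have "((\<lambda>x. d (\<i> * x)) has_integral (1 / 1) *\<^sub>R ?I) ((\<lambda>x. - \<i> * x) ` cbox (- (of_real r * (1 + \<i>))) (of_real r * (1 + \<i>)))"
  proof (rule has_integral_twiddle[where g = "\<lambda>x. \<i> * x" and h = "\<lambda>x. - \<i> * x"])
    show "\<exists>w z. (\<lambda>x. \<i> * x) ` cbox u v = cbox w z" for u v
      using image_mult_i_cbox by blast
    show "\<exists>w z. (\<lambda>x. - \<i> * x) ` cbox u v = cbox w z" for u v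
      using image_mult_mi_cbox by blast
    show "Henstock_Kurzweil_Integration.content ((\<lambda>x. \<i> * x) ` cbox u v) = 1 * Henstock_Kurzweil_Integration.content (cbox u v)" for u v
      unfolding image_mult_i_cbox content_cbox_complex by auto
    show "continuous (at x) (\<lambda>x. \<i> * x)" for x by (intro continuous_intros)
    show "(d has_integral ?I) (cbox (- (of_real r * (1 + \<i>))) (of_real r * (1 + \<i>)))"
      using i unfolding sq0 .
  qed auto
  moreover have "(\<lambda>x. - \<i> * x) ` cbox (- (of_real r * (1 + \<i>))) (of_real r * (1 + \<i>)) = sq 0 r"
    unfolding image_mult_mi_cbox by (auto simp: sq_def in_cbox_complex_iff)
  ultimately have "((\<lambda>x. - d x) has_integral ?I) (sq 0 r)"
    by (simp add: odd)
  from has_integral_neg[OF this] have "((\<lambda>x. d x) has_integral - ?I) (sq 0 r)"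
    by simp
  then have "- ?I = ?I" using i by (metis has_integral_unique)
  then show ?thesis by simp
qed

lemma geom_conv:
  fixes f :: "nat \<Rightarrow> 'a::banach"
  assumes d: "\<And>n. norm (f n - f (Suc n)) \<le> K * q^n" and q: "0 \<le> q" "q < 1"
  shows "convergent f \<and> (\<forall>n. norm (f n - lim f) \<le> K * q^n / (1 - q))"
proof -
  define \<delta> where "\<delta> j = f j - f (Suc j)" for j
  have sg: "summable (\<lambda>j. K * q^j)"
    using q by (intro summable_mult summable_geometric) auto
  have sd: "summable \<delta>"
  proof (rule summable_comparison_test[OF _ sg])
    show "\<exists>N. \<forall>n\<ge>N. norm (\<delta> n) \<le> K * q ^ n" unfolding \<delta>_def using d by blast
  qed
  have fn: "f n = f 0 - (\<Sum>j<n. \<delta> j)" for n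
    unfolding \<delta>_def sum_lessThan_telescope' by simp
  have lim1: "f \<longlonglongrightarrow> f 0 - suminf \<delta>"
  proof -
    have "(\<lambda>n. f 0 - (\<Sum>j<n. \<delta> j)) \<longlonglongrightarrow> f 0 - suminf \<delta>"
      by (intro tendsto_diff tendsto_const summable_LIMSEQ sd)
    moreover have "f = (\<lambda>n. f 0 - (\<Sum>j<n. \<delta> j))" by (rule ext) (rule fn)
    ultimately show ?thesis by simp
  qed
  then have conv: "convergent f" by (auto simp: convergent_def)
  have L: "lim f = f 0 - suminf \<delta>" using lim1 by (rule limI)
  have "norm (f n - lim f) \<le> K * q^n / (1 - q)" for n
  proof -
    have geo: "(\<lambda>j. (K * q^n) * q^j) sums ((K * q^n) * (1 / (1 - q)))"
      using q by (intro sums_mult geometric_sums) auto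
    have eqf: "(\<lambda>j. K * q^(j + n)) = (\<lambda>j. (K * q^n) * q^j)" by (rule ext) (simp add: power_add mult_ac)
    have "suminf \<delta> = (\<Sum>j. \<delta> (j + n)) + (\<Sum>j<n. \<delta> j)"
      by (rule suminf_split_initial_segment[OF sd])
    then have "f n - lim f = (\<Sum>j. \<delta> (j + n))"
      unfolding L fn[of n] by (simp add: algebra_simps)
    also have "norm \<dots> \<le> (\<Sum>j. K * q^(j + n))"
    proof (rule norm_suminf_le)
      show "norm (\<delta> (j + n)) \<le> K * q^(j + n)" for j using d unfolding \<delta>_def .
      show "summable (\<lambda>j. K * q^(j + n))"
        unfolding eqf using geo by (rule sums_summable)
    qed
    also have "(\<Sum>j. K * q^(j + n)) = K * q^n / (1 - q)"
      unfolding eqf using geo by (simp add: sums_iff)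
    finally show ?thesis .
  qed
  then show ?thesis using conv by blast
qed

lemma pp_scale: "e > 0 \<Longrightarrow> pp e w = pp 1 ((1 / e) *\<^sub>R w) / e\<^sup>2"
proof (cases "cmod w < e")
  case True
  assume e: "e > 0"
  have n: "cmod ((1 / e) *\<^sub>R w) = cmod w / e" using e by simp
  have "cmod ((1 / e) *\<^sub>R w) < 1" unfolding n using True e by simp
  from pp_in[OF zero_less_one this]
  have p1: "pp 1 ((1 / e) *\<^sub>R w) = 2 * (1 - (cmod w / e)\<^sup>2)"
    unfolding n by simp
  show ?thesis unfolding pp_in[OF e True] p1 using e
    by (simp add: field_simps power2_eq_square power4_eq_xxxx)
next
  case False
  assume e: "e > 0"
  have n: "cmod ((1 / e) *\<^sub>R w) = cmod w / e" using e by simp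
  have "1 \<le> cmod ((1 / e) *\<^sub>R w)" unfolding n using False e by simp
  then show ?thesis using e False pp_out[OF e] pp_out[OF zero_less_one] by simp
qed

definition c0 :: real where "c0 = integral (sq 0 1) (pp 1)"

lemma pp_integrable: "e > 0 \<Longrightarrow> pp e integrable_on sq c r"
  unfolding sq_def
  by (rule integrable_continuous, rule continuous_on_subset[OF continuous_pp], auto)

lemma int_pp: assumes e: "e > 0" shows "(pp e has_integral c0) (sq 0 e)"
proof -
  have i: "(pp 1 has_integral c0) (cbox (- (1 + \<i>)) (1 + \<i>))"
    using pp_integrable[of 1 0 1] unfolding c0_def sq_def by (simp add: integrable_integral)
  have "((\<lambda>x. pp 1 ((1 / e) *\<^sub>R x + 0)) has_integral (1 / \<bar>1 / e\<bar> ^ DIM(complex)) *\<^sub>R c0)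
      ((\<lambda>x. (1 / (1 / e)) *\<^sub>R x + - ((1 / (1 / e)) *\<^sub>R (0::complex))) ` cbox (- (1 + \<i>)) (1 + \<i>))"
    by (rule has_integral_affinity[OF i]) (use e in auto)
  moreover have "(\<lambda>x. (1 / (1 / e)) *\<^sub>R x + - ((1 / (1 / e)) *\<^sub>R (0::complex))) ` cbox (- (1 + \<i>)) (1 + \<i>) = sq 0 e"
  proof -
    have eqf: "(\<lambda>x. (1 / (1 / e)) *\<^sub>R x + - ((1 / (1 / e)) *\<^sub>R (0::complex))) = (\<lambda>x. e *\<^sub>R x)" by (rule ext) simp
    have "(0::complex) \<in> cbox (- (1 + \<i>)) (1 + \<i>)" by (simp add: in_cbox_complex_iff)
    then have ne: "cbox (- (1 + \<i>)) (1 + \<i>) \<noteq> {}" by blast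
    have im: "(\<lambda>x. e *\<^sub>R x) ` cbox (- (1 + \<i>)) (1 + \<i>) = cbox (e *\<^sub>R (- (1 + \<i>))) (e *\<^sub>R (1 + \<i>))"
      by (subst image_smult_cbox) (use ne e in simp)
    have s1: "e *\<^sub>R (- (1 + \<i>)) = 0 - of_real e * (1 + \<i>)" "e *\<^sub>R (1 + \<i>) = 0 + of_real e * (1 + \<i>)"
      by (simp_all add: scaleR_conv_of_real complex_eq_iff)
    show ?thesis unfolding eqf im sq_def s1 ..
  qed
  moreover have "c0 / (1 / e)\<^sup>2 = e\<^sup>2 * c0" using e by (simp add: field_simps)
  ultimately have "((\<lambda>x. pp 1 ((1 / e) *\<^sub>R x)) has_integral e\<^sup>2 * c0) (sq 0 e)"
    using e by simp
  from has_integral_mult_left[OF this, of "1 / e\<^sup>2"]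
  have "((\<lambda>x. pp 1 ((1 / e) *\<^sub>R x) * (1 / e\<^sup>2)) has_integral c0) (sq 0 e)"
    using e by simp
  moreover have "pp e = (\<lambda>x. pp 1 ((1 / e) *\<^sub>R x) / e\<^sup>2)" by (rule ext) (rule pp_scale[OF e])
  ultimately show ?thesis by simp
qed

lemma c0_pos: "c0 > 0"
proof -
  have sub: "sq 0 (1/2) \<subseteq> sq 0 1" unfolding mem_sq subset_iff by auto
  have "1 = integral (sq 0 (1/2)) (\<lambda>x. 1::real)"
    unfolding sq_def by (simp add: content_cbox_complex)
  also have "\<dots> \<le> integral (sq 0 (1/2)) (pp 1)"
  proof (rule integral_le)
    show "(\<lambda>x. 1::real) integrable_on sq 0 (1/2)" unfolding sq_def by (rule integrable_const)
    show "pp 1 integrable_on sq 0 (1/2)" by (rule pp_integrable) simp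
    fix x assume "x \<in> sq 0 (1/2)"
    then have a: "\<bar>Re x\<bar> \<le> 1/2" "\<bar>Im x\<bar> \<le> 1/2" unfolding mem_sq by auto
    have "(Re x)\<^sup>2 \<le> (1/2)\<^sup>2" "(Im x)\<^sup>2 \<le> (1/2)\<^sup>2"
      using a by (simp_all add: abs_le_square_iff[symmetric])
    then have "(Re x)\<^sup>2 \<le> 1/4" "(Im x)\<^sup>2 \<le> 1/4" by (simp_all add: power2_eq_square)
    then have n: "(cmod x)\<^sup>2 \<le> 1/2" using cmod_power2[of x] by linarith
    then have "(cmod x)\<^sup>2 < 1\<^sup>2" unfolding power_one by linarith
    then have "cmod x < 1" by (rule power_less_imp_less_base) simp
    from pp_in[OF zero_less_one this] have "pp 1 x = 2 * (1 - (cmod x)\<^sup>2)" by simp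
    moreover have "1 \<le> 2 * (1 - (cmod x)\<^sup>2)" using n by simp
    ultimately show "1 \<le> pp 1 x" by simp
  qed
  also have "\<dots> \<le> integral (sq 0 1) (pp 1)"
    using pp_nonneg[OF zero_less_one]
    by (intro integral_subset_le[OF sub pp_integrable[OF zero_less_one] pp_integrable[OF zero_less_one]]) blast
  finally show ?thesis unfolding c0_def by simp
qed

definition cnjL :: "complex \<Rightarrow>\<^sub>L complex" where "cnjL = Blinfun cnj"
lemma cnjL_apply [simp]: "blinfun_apply cnjL v = cnj v"
  by (simp add: cnjL_def bounded_linear_Blinfun_apply bounded_linear_cnj)

definition LL :: "complex \<Rightarrow> complex \<Rightarrow> (complex \<Rightarrow>\<^sub>L complex)" where
  "LL \<alpha> \<beta> = blinfun_mult_right \<alpha> + (blinfun_mult_right \<beta> o\<^sub>L cnjL)"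
lemma LL_apply [simp]: "blinfun_apply (LL \<alpha> \<beta>) v = \<alpha> * v + \<beta> * cnj v"
  by (simp add: LL_def blinfun.add_left)

lemma continuous_on_LL:
  assumes "continuous_on S \<alpha>" "continuous_on S \<beta>"
  shows "continuous_on S (\<lambda>x. LL (\<alpha> x) (\<beta> x))"
  unfolding LL_def by (intro continuous_intros assms)

lemma int_UNIV_sq:
  fixes f :: "complex \<Rightarrow> complex"
  assumes "continuous_on UNIV f" "\<And>\<zeta>. \<zeta> \<notin> sq c r \<Longrightarrow> f \<zeta> = 0"
  shows "(f has_integral integral (sq c r) f) UNIV" "f integrable_on UNIV"
    "integral UNIV f = integral (sq c r) f"
proof -
  have "f integrable_on sq c r" unfolding sq_def
    by (rule integrable_continuous, rule continuous_on_subset[OF assms(1)], simp)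
  then show 1: "(f has_integral integral (sq c r) f) UNIV"
    by (rule has_integral_on_superset[OF integrable_integral]) (use assms(2) in auto)
  then show "f integrable_on UNIV" by blast
  show "integral UNIV f = integral (sq c r) f" using 1 by (rule integral_unique)
qed

lemma integrable_sq:
  fixes f :: "complex \<Rightarrow> complex"
  assumes "continuous_on UNIV f"
  shows "f integrable_on sq c r"
  unfolding sq_def by (rule integrable_continuous, rule continuous_on_subset[OF assms], simp)

definition eps :: "nat \<Rightarrow> real" where "eps n = (1/2)^n"
lemma eps_pos: "eps n > 0" by (simp add: eps_def)
lemma eps_Suc: "eps (Suc n) = eps n / 2" by (simp add: eps_def)

locale dbar_data =
  fixes F :: "complex \<Rightarrow> complex" and C \<beta> R M :: real
  assumes Fhol: "\<And>x y. cmod (F x - F y) \<le> C * cmod (x - y) powr \<beta>"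
    and Fsupp: "\<And>z. R \<le> cmod z \<Longrightarrow> F z = 0"
    and Fbd: "\<And>z. cmod (F z) \<le> M"
    and bet: "0 < \<beta>" "\<beta> \<le> 1" and Cnn: "0 \<le> C" and Rpos: "0 < R"
begin

lemma Fcont: "continuous_on UNIV F"
proof (rule continuous_at_imp_continuous_on, intro ballI)
  fix x :: complex
  have g: "((\<lambda>y. C * cmod (y - x) powr \<beta>) \<longlongrightarrow> 0) (at x)"
  proof -
    have "((\<lambda>y. cmod (y - x)) \<longlongrightarrow> 0) (at x)"
      by (intro tendsto_norm_zero) (auto intro!: tendsto_eq_intros)
    then have "((\<lambda>y. cmod (y - x) powr \<beta>) \<longlongrightarrow> 0) (at x)"
      by (rule tendsto_zero_powrI) (use bet in auto)
    then show ?thesis by (rule tendsto_mult_right_zero)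
  qed
  have "((\<lambda>y. F y - F x) \<longlongrightarrow> 0) (at x)"
    by (rule Lim_null_comparison[OF _ g]) (use Fhol in auto)
  then show "isCont F x" unfolding isCont_def by (simp add: LIM_zero_iff)
qed

lemma F_out_sq: "\<zeta> \<notin> sq 0 R \<Longrightarrow> F \<zeta> = 0"
proof -
  assume "\<zeta> \<notin> sq 0 R"
  then have "\<zeta> \<notin> ball 0 R" using ball_sub_sq[of 0 R] by blast
  then have "R \<le> cmod \<zeta>" by (simp add: dist_norm)
  then show ?thesis by (rule Fsupp)
qed

definition GG :: "nat \<Rightarrow> complex \<Rightarrow> complex" where
  "GG n z = integral UNIV (\<lambda>\<zeta>. F \<zeta> * KK (eps n) (\<zeta> - z))"
definition aa :: "nat \<Rightarrow> complex \<Rightarrow> complex" where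
  "aa n z = - integral UNIV (\<lambda>\<zeta>. F \<zeta> * kk (eps n) (\<zeta> - z))"
definition bb :: "nat \<Rightarrow> complex \<Rightarrow> complex" where
  "bb n z = - integral UNIV (\<lambda>\<zeta>. F \<zeta> * of_real (pp (eps n) (\<zeta> - z)))"

lemma cont_kern:
  assumes "continuous_on UNIV k"
  shows "continuous_on UNIV (\<lambda>\<zeta>. F \<zeta> * k (\<zeta> - z))"
  by (intro continuous_intros Fcont continuous_on_compose2[OF assms]) auto

lemma GG_deriv: "(GG n has_derivative (\<lambda>v. aa n z * v + bb n z * cnj v)) (at z)"
proof -
  define e where "e = eps n"
  have e: "e > 0" unfolding e_def by (rule eps_pos)
  define a0 b0 where "a0 = 0 - of_real R * (1 + \<i>)" and "b0 = 0 + of_real R * (1 + \<i>)"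
  have Q: "sq 0 R = cbox a0 b0" unfolding sq_def a0_def b0_def ..
  define f where "f x t = F t * KK e (t - x)" for x t
  define fx where "fx x t = LL (- (F t * kk e (t - x))) (- (F t * of_real (pp e (t - x))))" for x t
  have 1: "((\<lambda>x. f x t) has_derivative blinfun_apply (fx x t)) (at x within UNIV)" for x t
  proof -
    have "((\<lambda>x. KK e (t - x)) has_derivative
        (\<lambda>v. kk e (t - x) * (0 - v) + of_real (pp e (t - x)) * cnj (0 - v))) (at x)"
      using has_derivative_compose[OF has_derivative_diff[OF has_derivative_const has_derivative_ident] KK_deriv[OF e]]
      by simp
    from has_derivative_mult_right[OF this, of "F t"]
    have "((\<lambda>x. f x t) has_derivative
        (\<lambda>v. F t * (kk e (t - x) * (0 - v) + of_real (pp e (t - x)) * cnj (0 - v)))) (at x)"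
      unfolding f_def .
    moreover have "(\<lambda>v. F t * (kk e (t - x) * (0 - v) + of_real (pp e (t - x)) * cnj (0 - v)))
        = blinfun_apply (fx x t)"
      by (rule ext) (simp add: fx_def algebra_simps)
    ultimately show ?thesis by simp
  qed
  have 2: "f x integrable_on cbox a0 b0" for x
    unfolding f_def Q[symmetric] by (rule integrable_sq, rule cont_kern, rule continuous_KK[OF e])
  have 3: "continuous_on (UNIV \<times> cbox a0 b0) (\<lambda>(x, t). fx x t)"
    unfolding fx_def split_beta
    by (intro continuous_on_LL continuous_intros continuous_on_compose2[OF Fcont]
        continuous_on_compose2[OF continuous_kk[OF e]] continuous_on_compose2[OF continuous_pp[OF e]]) auto
  have L: "((\<lambda>x. integral (cbox a0 b0) (f x)) has_derivative integral (cbox a0 b0) (fx z)) (at z within UNIV)"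
    by (rule leibniz_rule[OF 1 2 3]) auto
  have GGe: "GG n = (\<lambda>x. integral (cbox a0 b0) (f x))"
  proof (rule ext)
    fix x
    show "GG n x = integral (cbox a0 b0) (f x)"
      unfolding GG_def f_def e_def Q[symmetric]
      by (rule int_UNIV_sq(3), rule cont_kern, rule continuous_KK[OF eps_pos]) (simp add: F_out_sq)
  qed
  have ia: "integral UNIV (\<lambda>\<zeta>. F \<zeta> * kk e (\<zeta> - z)) = integral (cbox a0 b0) (\<lambda>\<zeta>. F \<zeta> * kk e (\<zeta> - z))"
    unfolding Q[symmetric]
    by (rule int_UNIV_sq(3), rule cont_kern, rule continuous_kk[OF e]) (simp add: F_out_sq)
  have ib: "integral UNIV (\<lambda>\<zeta>. F \<zeta> * of_real (pp e (\<zeta> - z))) = integral (cbox a0 b0) (\<lambda>\<zeta>. F \<zeta> * of_real (pp e (\<zeta> - z)))"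
    unfolding Q[symmetric]
    by (rule int_UNIV_sq(3), rule cont_kern, intro continuous_intros continuous_pp[OF e]) (simp add: F_out_sq)
  have ika: "(\<lambda>\<zeta>. F \<zeta> * kk e (\<zeta> - z)) integrable_on cbox a0 b0"
    unfolding Q[symmetric] by (rule integrable_sq, rule cont_kern, rule continuous_kk[OF e])
  have ikb: "(\<lambda>\<zeta>. F \<zeta> * of_real (pp e (\<zeta> - z))) integrable_on cbox a0 b0"
    unfolding Q[symmetric] by (rule integrable_sq, rule cont_kern, intro continuous_intros continuous_pp[OF e])
  have ifx: "fx z integrable_on cbox a0 b0"
    unfolding fx_def
    by (rule integrable_continuous, intro continuous_on_LL continuous_intros
        continuous_on_compose2[OF Fcont] continuous_on_compose2[OF continuous_kk[OF e]]
        continuous_on_compose2[OF continuous_pp[OF e]]) auto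
  have D: "blinfun_apply (integral (cbox a0 b0) (fx z)) = (\<lambda>v. aa n z * v + bb n z * cnj v)"
  proof (rule ext)
    fix v
    have "blinfun_apply (integral (cbox a0 b0) (fx z)) v = integral (cbox a0 b0) (\<lambda>t. blinfun_apply (fx z t) v)"
      by (rule blinfun_apply_integral[OF ifx])
    also have "\<dots> = integral (cbox a0 b0) (\<lambda>t. (- (F t * kk e (t - z))) * v + (- (F t * of_real (pp e (t - z)))) * cnj v)"
      by (simp add: fx_def)
    also have "\<dots> = integral (cbox a0 b0) (\<lambda>t. (- (F t * kk e (t - z))) * v) + integral (cbox a0 b0) (\<lambda>t. (- (F t * of_real (pp e (t - z)))) * cnj v)"
      by (rule integral_add) (intro integrable_on_mult_left integrable_neg ika ikb)+
    also have "\<dots> = aa n z * v + bb n z * cnj v"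
      unfolding aa_def bb_def e_def[symmetric] ia ib by simp
    finally show "blinfun_apply (integral (cbox a0 b0) (fx z)) v = aa n z * v + bb n z * cnj v" .
  qed
  show ?thesis using L unfolding GGe[symmetric] D by simp
qed

end

context dbar_data
begin

definition qq :: real where "qq = (1/2) powr \<beta>"

lemma qq_pos: "0 < qq" unfolding qq_def by simp
lemma qq_lt1: "qq < 1"
proof -
  have "(1/2::real) powr \<beta> < 1 powr \<beta>" using bet by (intro powr_less_mono2) auto
  then show ?thesis unfolding qq_def by simp
qed

lemma eps_powr: "eps n powr \<beta> = qq ^ n"
proof -
  have "eps n powr \<beta> = ((1/2) powr real n) powr \<beta>" by (simp add: eps_def powr_realpow)
  also have "\<dots> = (1/2) powr (real n * \<beta>)" by (simp add: powr_powr)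
  also have "\<dots> = qq ^ n" unfolding qq_def by (simp add: powr_power)
  finally show ?thesis .
qed

lemma local_bound:
  fixes k :: "complex \<Rightarrow> complex"
  assumes kc: "continuous_on UNIV k" and kz: "\<And>w. e \<le> cmod w \<Longrightarrow> k w = 0"
    and kb: "\<And>w. cmod (k w) \<le> K" and e: "e > 0"
  shows "integral UNIV (\<lambda>\<zeta>. F \<zeta> * k (\<zeta> - z))
           = integral (sq z e) (\<lambda>\<zeta>. (F \<zeta> - F z) * k (\<zeta> - z)) + F z * integral (sq 0 e) k"
    and "cmod (integral (sq z e) (\<lambda>\<zeta>. (F \<zeta> - F z) * k (\<zeta> - z))) \<le> C * e powr \<beta> * K * (4 * e\<^sup>2)"
    and "cmod (integral UNIV (\<lambda>\<zeta>. F \<zeta> * k (\<zeta> - z))) \<le> M * K * (4 * e\<^sup>2)"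
proof -
  have K0: "0 \<le> K" using kb[of 0] norm_ge_zero order_trans by blast
  have M0: "0 \<le> M" using Fbd[of 0] norm_ge_zero order_trans by blast
  have out: "k (\<zeta> - z) = 0" if "\<zeta> \<notin> sq z e" for \<zeta>
  proof -
    have "\<zeta> \<notin> ball z e" using that ball_sub_sq[of z e] by blast
    then have "e \<le> cmod (\<zeta> - z)" by (simp add: dist_norm norm_minus_commute)
    then show ?thesis by (rule kz)
  qed
  have ck: "continuous_on UNIV (\<lambda>\<zeta>. k (\<zeta> - z))"
    by (intro continuous_on_compose2[OF kc] continuous_intros) auto
  have U: "integral UNIV (\<lambda>\<zeta>. F \<zeta> * k (\<zeta> - z)) = integral (sq z e) (\<lambda>\<zeta>. F \<zeta> * k (\<zeta> - z))"
    by (rule int_UNIV_sq(3), rule cont_kern[OF kc]) (simp add: out)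
  have i1: "(\<lambda>\<zeta>. (F \<zeta> - F z) * k (\<zeta> - z)) integrable_on sq z e"
    by (rule integrable_sq) (intro continuous_intros Fcont ck)
  have i2: "(\<lambda>\<zeta>. F z * k (\<zeta> - z)) integrable_on sq z e"
    by (rule integrable_sq) (intro continuous_intros ck)
  have "integral (sq z e) (\<lambda>\<zeta>. F \<zeta> * k (\<zeta> - z))
      = integral (sq z e) (\<lambda>\<zeta>. (F \<zeta> - F z) * k (\<zeta> - z) + F z * k (\<zeta> - z))"
    by (simp add: algebra_simps)
  also have "\<dots> = integral (sq z e) (\<lambda>\<zeta>. (F \<zeta> - F z) * k (\<zeta> - z)) + integral (sq z e) (\<lambda>\<zeta>. F z * k (\<zeta> - z))"
    by (rule integral_add[OF i1 i2])
  also have "integral (sq z e) (\<lambda>\<zeta>. F z * k (\<zeta> - z)) = F z * integral (sq 0 e) k"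
    using integral_shift_sq[OF kc, of z e] by simp
  finally show "integral UNIV (\<lambda>\<zeta>. F \<zeta> * k (\<zeta> - z))
           = integral (sq z e) (\<lambda>\<zeta>. (F \<zeta> - F z) * k (\<zeta> - z)) + F z * integral (sq 0 e) k"
    unfolding U .
  have Q: "sq z e = cbox (z - of_real e * (1 + \<i>)) (z + of_real e * (1 + \<i>))" by (simp add: sq_def)
  have "cmod (integral (sq z e) (\<lambda>\<zeta>. (F \<zeta> - F z) * k (\<zeta> - z)))
      \<le> (C * e powr \<beta> * K) * Henstock_Kurzweil_Integration.content (sq z e)"
    unfolding Q
  proof (rule has_integral_bound)
    show "0 \<le> C * e powr \<beta> * K" using Cnn K0 by simp
    show "((\<lambda>\<zeta>. (F \<zeta> - F z) * k (\<zeta> - z)) has_integral integral (cbox (z - of_real e * (1 + \<i>)) (z + of_real e * (1 + \<i>))) (\<lambda>\<zeta>. (F \<zeta> - F z) * k (\<zeta> - z)))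
        (cbox (z - of_real e * (1 + \<i>)) (z + of_real e * (1 + \<i>)))"
      using i1 unfolding Q by (rule integrable_integral)
    fix \<zeta> assume "\<zeta> \<in> cbox (z - of_real e * (1 + \<i>)) (z + of_real e * (1 + \<i>))"
    show "cmod ((F \<zeta> - F z) * k (\<zeta> - z)) \<le> C * e powr \<beta> * K"
    proof (cases "cmod (\<zeta> - z) < e")
      case True
      have "cmod (F \<zeta> - F z) \<le> C * cmod (\<zeta> - z) powr \<beta>" by (rule Fhol)
      also have "\<dots> \<le> C * e powr \<beta>"
        using True bet Cnn by (intro mult_left_mono powr_mono2) auto
      finally have "cmod (F \<zeta> - F z) \<le> C * e powr \<beta>" .
      then show ?thesis unfolding norm_mult
        by (rule mult_mono[OF _ kb]) (use Cnn in auto)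
    next
      case False
      then show ?thesis using kz[of "\<zeta> - z"] Cnn K0 by simp
    qed
  qed
  also have "\<dots> = C * e powr \<beta> * K * (4 * e\<^sup>2)" using e by (simp add: content_sq)
  finally show "cmod (integral (sq z e) (\<lambda>\<zeta>. (F \<zeta> - F z) * k (\<zeta> - z))) \<le> C * e powr \<beta> * K * (4 * e\<^sup>2)" .
  have i3: "(\<lambda>\<zeta>. F \<zeta> * k (\<zeta> - z)) integrable_on sq z e"
    by (rule integrable_sq) (intro continuous_intros Fcont ck)
  have "cmod (integral (sq z e) (\<lambda>\<zeta>. F \<zeta> * k (\<zeta> - z))) \<le> (M * K) * Henstock_Kurzweil_Integration.content (sq z e)"
    unfolding Q
  proof (rule has_integral_bound)
    show "0 \<le> M * K" using M0 K0 by simp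
    show "((\<lambda>\<zeta>. F \<zeta> * k (\<zeta> - z)) has_integral integral (cbox (z - of_real e * (1 + \<i>)) (z + of_real e * (1 + \<i>))) (\<lambda>\<zeta>. F \<zeta> * k (\<zeta> - z)))
        (cbox (z - of_real e * (1 + \<i>)) (z + of_real e * (1 + \<i>)))"
      using i3 unfolding Q by (rule integrable_integral)
    fix \<zeta> assume "\<zeta> \<in> cbox (z - of_real e * (1 + \<i>)) (z + of_real e * (1 + \<i>))"
    show "cmod (F \<zeta> * k (\<zeta> - z)) \<le> M * K"
      unfolding norm_mult by (rule mult_mono[OF Fbd kb]) (use M0 in auto)
  qed
  also have "\<dots> = M * K * (4 * e\<^sup>2)" using e by (simp add: content_sq)
  finally show "cmod (integral UNIV (\<lambda>\<zeta>. F \<zeta> * k (\<zeta> - z))) \<le> M * K * (4 * e\<^sup>2)" unfolding U .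
qed

lemma int_UNIV_kern:
  assumes "continuous_on UNIV k"
  shows "(\<lambda>\<zeta>. F \<zeta> * k (\<zeta> - z)) integrable_on UNIV"
  by (rule int_UNIV_sq(2)[of _ 0 R], rule cont_kern[OF assms]) (simp add: F_out_sq)

lemma est_a: "cmod (aa n z - aa (Suc n) z) \<le> 20 * C * qq ^ n"
proof -
  define e where "e = eps n"
  have e: "e > 0" unfolding e_def by (rule eps_pos)
  have e': "eps (Suc n) = e / 2" "eps (Suc n) > 0" unfolding e_def by (simp_all add: eps_Suc eps_pos)
  define d where "d w = kk e w - kk (e/2) w" for w
  have dc: "continuous_on UNIV d" unfolding d_def
    by (intro continuous_intros continuous_kk) (use e in auto)
  have dz: "d w = 0" if "e \<le> cmod w" for w
    using that e unfolding d_def by (simp add: kk_out)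
  have db: "cmod (d w) \<le> 5 / e\<^sup>2" for w
  proof -
    have "cmod (d w) \<le> cmod (kk e w) + cmod (kk (e/2) w)" unfolding d_def by (rule norm_triangle_ineq4)
    also have "\<dots> \<le> 1 / e\<^sup>2 + 1 / (e/2)\<^sup>2" using e by (intro add_mono kk_norm) auto
    also have "\<dots> = 5 / e\<^sup>2" by (simp add: field_simps power2_eq_square)
    finally show ?thesis .
  qed
  have dodd: "d (\<i> * w) = - d w" for w unfolding d_def by (simp add: kk_rot)
  have "aa n z - aa (Suc n) z = - (integral UNIV (\<lambda>\<zeta>. F \<zeta> * kk e (\<zeta> - z)) - integral UNIV (\<lambda>\<zeta>. F \<zeta> * kk (e/2) (\<zeta> - z)))"
    unfolding aa_def e_def[symmetric] e'(1) by simp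
  also have "\<dots> = - integral UNIV (\<lambda>\<zeta>. F \<zeta> * d (\<zeta> - z))"
    unfolding d_def right_diff_distrib
    by (subst integral_diff) (intro int_UNIV_kern continuous_kk, use e in auto)+
  finally have eq: "aa n z - aa (Suc n) z = - integral UNIV (\<lambda>\<zeta>. F \<zeta> * d (\<zeta> - z))" .
  have z0: "integral (sq 0 e) d = 0" by (rule rot_integral_zero[OF dc dodd]) (use e in auto)
  have "cmod (aa n z - aa (Suc n) z) = cmod (integral (sq z e) (\<lambda>\<zeta>. (F \<zeta> - F z) * d (\<zeta> - z)))"
    using local_bound(1)[OF dc dz db e, of z] eq z0 by simp
  also have "\<dots> \<le> C * e powr \<beta> * (5 / e\<^sup>2) * (4 * e\<^sup>2)" by (rule local_bound(2)[OF dc dz db e])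
  also have "\<dots> = 20 * C * qq ^ n" using e unfolding e_def eps_powr by (simp add: field_simps)
  finally show ?thesis .
qed

lemma est_b: "cmod (bb n z + of_real c0 * F z) \<le> 8 * C * qq ^ n"
proof -
  define e where "e = eps n"
  have e: "e > 0" unfolding e_def by (rule eps_pos)
  define d where "d w = (of_real (pp e w) :: complex)" for w
  have dc: "continuous_on UNIV d" unfolding d_def
    by (intro continuous_intros continuous_pp e)
  have dz: "d w = 0" if "e \<le> cmod w" for w
    using that e unfolding d_def by (simp add: pp_out)
  have db: "cmod (d w) \<le> 2 / e\<^sup>2" for w
    unfolding d_def using pp_nonneg[OF e, of w] pp_le[OF e, of w] by simp
  have ip: "integral (sq 0 e) d = of_real c0"
    unfolding d_def by (rule integral_unique, rule has_integral_of_real, rule int_pp[OF e])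
  have "bb n z + of_real c0 * F z = - integral (sq z e) (\<lambda>\<zeta>. (F \<zeta> - F z) * d (\<zeta> - z))"
    using local_bound(1)[OF dc dz db e, of z] ip unfolding bb_def e_def[symmetric] d_def[symmetric] by simp
  then have "cmod (bb n z + of_real c0 * F z) = cmod (integral (sq z e) (\<lambda>\<zeta>. (F \<zeta> - F z) * d (\<zeta> - z)))"
    by simp
  also have "\<dots> \<le> C * e powr \<beta> * (2 / e\<^sup>2) * (4 * e\<^sup>2)" by (rule local_bound(2)[OF dc dz db e])
  also have "\<dots> = 8 * C * qq ^ n" using e unfolding e_def eps_powr by (simp add: field_simps)
  finally show ?thesis .
qed

lemma est_G: "cmod (GG n z - GG (Suc n) z) \<le> 24 * M * (1/2) ^ n"
proof -
  define e where "e = eps n"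
  have e: "e > 0" unfolding e_def by (rule eps_pos)
  have e': "eps (Suc n) = e / 2" unfolding e_def by (simp add: eps_Suc)
  define d where "d w = KK e w - KK (e/2) w" for w
  have dc: "continuous_on UNIV d" unfolding d_def
    by (intro continuous_intros continuous_KK) (use e in auto)
  have dz: "d w = 0" if "e \<le> cmod w" for w
    using that e unfolding d_def by (simp add: KK_out)
  have db: "cmod (d w) \<le> 6 / e" for w
  proof -
    have "cmod (d w) \<le> cmod (KK e w) + cmod (KK (e/2) w)" unfolding d_def by (rule norm_triangle_ineq4)
    also have "\<dots> \<le> 2 / e + 2 / (e/2)" using e by (intro add_mono KK_norm) auto
    also have "\<dots> = 6 / e" by (simp add: field_simps)
    finally show ?thesis .
  qed
  have "GG n z - GG (Suc n) z = integral UNIV (\<lambda>\<zeta>. F \<zeta> * d (\<zeta> - z))"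
    unfolding GG_def e_def[symmetric] e' d_def right_diff_distrib
    by (subst integral_diff) (intro int_UNIV_kern continuous_KK, use e in auto)+
  then have "cmod (GG n z - GG (Suc n) z) \<le> M * (6 / e) * (4 * e\<^sup>2)"
    using local_bound(3)[OF dc dz db e] by simp
  also have "\<dots> = 24 * M * (1/2) ^ n" using e unfolding e_def eps_def by (simp add: field_simps power2_eq_square)
  finally show ?thesis .
qed

end

context dbar_data
begin

lemma aa_cont: "continuous_on UNIV (aa n)"
proof -
  define e where "e = eps n"
  have e: "e > 0" unfolding e_def by (rule eps_pos)
  define a0 b0 where "a0 = 0 - of_real R * (1 + \<i>)" and "b0 = 0 + of_real R * (1 + \<i>)"
  have Q: "sq 0 R = cbox a0 b0" unfolding sq_def a0_def b0_def ..
  have eq: "aa n = (\<lambda>z. - integral (cbox a0 b0) (\<lambda>\<zeta>. F \<zeta> * kk e (\<zeta> - z)))"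
  proof (rule ext)
    fix z show "aa n z = - integral (cbox a0 b0) (\<lambda>\<zeta>. F \<zeta> * kk e (\<zeta> - z))"
      unfolding aa_def e_def Q[symmetric]
      by (subst int_UNIV_sq(3), rule cont_kern, rule continuous_kk[OF eps_pos]) (simp_all add: F_out_sq)
  qed
  have "continuous_on UNIV (\<lambda>z. integral (cbox a0 b0) (\<lambda>\<zeta>. F \<zeta> * kk e (\<zeta> - z)))"
    by (rule integral_continuous_on_param)
      (auto simp: split_beta intro!: continuous_intros continuous_on_compose2[OF Fcont]
        continuous_on_compose2[OF continuous_kk[OF e]])
  then show ?thesis unfolding eq by (intro continuous_intros)
qed

lemma dbar_main:
  "\<exists>g A. continuous_on UNIV A \<and> (\<forall>z. (g has_derivative (\<lambda>v. A z * v - of_real c0 * F z * cnj v)) (at z))"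
proof -
  define A where "A z = lim (\<lambda>n. aa n z)" for z
  have Ab: "cmod (aa n z - A z) \<le> 20 * C * qq ^ n / (1 - qq)" for n z
    using geom_conv[of "\<lambda>n. aa n z" "20 * C" qq, OF est_a] qq_pos qq_lt1 unfolding A_def by auto
  have Gc: "convergent (\<lambda>n. GG n 0)"
    using geom_conv[of "\<lambda>n. GG n 0" "24 * M" "1/2", OF est_G] by auto
  then obtain l where l: "(\<lambda>n. GG n 0) \<longlonglongrightarrow> l" by (auto simp: convergent_def)
  have qn: "(\<lambda>n. qq ^ n) \<longlonglongrightarrow> 0" using qq_pos qq_lt1 by (intro LIMSEQ_power_zero) auto
  define T where "T n = (20 * C / (1 - qq) + 8 * C) * qq ^ n" for n
  have Tl: "T \<longlonglongrightarrow> 0" unfolding T_def by (rule tendsto_mult_right_zero[OF qn])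
  define T' where "T' n = (20 * C / (1 - qq)) * qq ^ n" for n
  have T'l: "T' \<longlonglongrightarrow> 0" unfolding T'_def by (rule tendsto_mult_right_zero[OF qn])
  have key: "cmod ((aa n x * h + bb n x * cnj h) - (A x * h - of_real c0 * F x * cnj h)) \<le> T n * cmod h" for n x h
  proof -
    have "(aa n x * h + bb n x * cnj h) - (A x * h - of_real c0 * F x * cnj h)
        = (aa n x - A x) * h + (bb n x + of_real c0 * F x) * cnj h" by (simp add: algebra_simps)
    then have "cmod ((aa n x * h + bb n x * cnj h) - (A x * h - of_real c0 * F x * cnj h))
        \<le> cmod (aa n x - A x) * cmod h + cmod (bb n x + of_real c0 * F x) * cmod h"
      by (metis complex_mod_cnj norm_mult norm_triangle_ineq)
    also have "\<dots> \<le> (20 * C * qq ^ n / (1 - qq)) * cmod h + (8 * C * qq ^ n) * cmod h"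
      by (intro add_mono mult_right_mono Ab est_b) auto
    also have "\<dots> = T n * cmod h" unfolding T_def by (simp add: algebra_simps)
    finally show ?thesis .
  qed
  have nle: "\<forall>\<^sub>F n in sequentially. \<forall>x\<in>UNIV. \<forall>h. cmod ((aa n x * h + bb n x * cnj h) - (A x * h - of_real c0 * F x * cnj h)) \<le> e * cmod h"
    if e: "e > 0" for e
  proof -
    have "\<forall>\<^sub>F n in sequentially. T n < e" using order_tendstoD(2)[OF Tl e] .
    then show ?thesis
    proof (rule eventually_mono, intro ballI allI)
      fix n x h assume "T n < e"
      then have "T n * cmod h \<le> e * cmod h" by (intro mult_right_mono) auto
      then show "cmod ((aa n x * h + bb n x * cnj h) - (A x * h - of_real c0 * F x * cnj h)) \<le> e * cmod h"
        using key[of n x h] by linarith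
    qed
  qed
  obtain g where g: "\<forall>x\<in>UNIV. (\<lambda>n. GG n x) \<longlonglongrightarrow> g x \<and>
      (g has_derivative (\<lambda>v. A x * v - of_real c0 * F x * cnj v)) (at x within UNIV)"
    using has_derivative_sequence[OF convex_UNIV, of GG "\<lambda>n x v. aa n x * v + bb n x * cnj v"
        "\<lambda>x v. A x * v - of_real c0 * F x * cnj v" 0 l] GG_deriv nle l by blast
  have Acont: "continuous_on UNIV A"
  proof (rule uniform_limit_theorem[where f = aa and F = sequentially])
    show "\<forall>\<^sub>F n in sequentially. continuous_on UNIV (aa n)" by (simp add: aa_cont)
    show "uniform_limit UNIV aa A sequentially"
      unfolding uniform_limit_iff
    proof (intro allI impI)
      fix e :: real assume e: "e > 0"
      have "\<forall>\<^sub>F n in sequentially. T' n < e" using order_tendstoD(2)[OF T'l e] .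
      then show "\<forall>\<^sub>F n in sequentially. \<forall>x\<in>UNIV. dist (aa n x) (A x) < e"
      proof (rule eventually_mono, intro ballI)
        fix n x assume "T' n < e"
        moreover have "dist (aa n x) (A x) \<le> T' n" using Ab[of n x] unfolding T'_def dist_norm by simp
        ultimately show "dist (aa n x) (A x) < e" by linarith
      qed
    qed
  qed simp
  show ?thesis using g Acont by auto
qed

end

lemma powr_subadd:
  fixes a b \<beta> :: real
  assumes "0 \<le> a" "0 \<le> b" "0 < \<beta>" "\<beta> \<le> 1"
  shows "(a + b) powr \<beta> \<le> a powr \<beta> + b powr \<beta>"
proof (cases "a + b = 0")
  case True then show ?thesis using assms by simp
next
  case False
  define s where "s = a + b"
  have s: "s > 0" using False assms unfolding s_def by simp
  define t where "t = a / s"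
  have t: "0 \<le> t" "t \<le> 1" using assms s unfolding t_def s_def by auto
  have t1: "0 \<le> 1 - t" "1 - t \<le> 1" using t by auto
  have a: "a = s * t" and b: "b = s * (1 - t)" using s unfolding t_def s_def by (auto simp: field_simps)
  have "t \<le> t powr \<beta>" using powr_mono'[OF assms(4) t] t by simp
  moreover have "1 - t \<le> (1 - t) powr \<beta>" using powr_mono'[OF assms(4) t1] t1 by simp
  ultimately have "1 \<le> t powr \<beta> + (1 - t) powr \<beta>" by linarith
  then have "s powr \<beta> * 1 \<le> s powr \<beta> * (t powr \<beta> + (1 - t) powr \<beta>)"
    by (intro mult_left_mono) auto
  moreover have "s * t + s * (1 - t) = s" by (simp add: algebra_simps)
  ultimately show ?thesis unfolding s_def[symmetric] a b
    using t t1 s by (simp add: powr_mult distrib_left)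
qed

lemma holder_ext_real:
  fixes u :: "complex \<Rightarrow> real"
  assumes U: "U \<noteq> {}" "bounded U"
    and hol: "\<And>x y. x \<in> U \<Longrightarrow> y \<in> U \<Longrightarrow> \<bar>u x - u y\<bar> \<le> C * cmod (x - y) powr \<beta>"
    and bet: "0 < \<beta>" "\<beta> \<le> 1" and C: "0 \<le> C"
  shows "\<exists>v. (\<forall>x\<in>U. v x = u x) \<and> (\<forall>x y. \<bar>v x - v y\<bar> \<le> C * cmod (x - y) powr \<beta>)"
proof -
  obtain y0 where y0: "y0 \<in> U" using U by blast
  obtain a where a: "\<And>x. x \<in> U \<Longrightarrow> norm x \<le> a" using U(2) unfolding bounded_iff by blast
  define S where "S x = (\<lambda>y. u y + C * cmod (x - y) powr \<beta>) ` U" for x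
  define v where "v x = Inf (S x)" for x
  have lb: "u y0 - C * (2 * a) powr \<beta> \<le> u y" if "y \<in> U" for y
  proof -
    have "cmod (y - y0) \<le> 2 * a" using a[OF that] a[OF y0] norm_triangle_ineq4[of y y0] by linarith
    then have "C * cmod (y - y0) powr \<beta> \<le> C * (2 * a) powr \<beta>"
      using C bet by (intro mult_left_mono powr_mono2) auto
    moreover have "\<bar>u y - u y0\<bar> \<le> C * cmod (y - y0) powr \<beta>" by (rule hol[OF that y0])
    ultimately show ?thesis by linarith
  qed
  have bdd: "bdd_below (S x)" for x
    unfolding S_def bdd_below_def
  proof (rule exI[of _ "u y0 - C * (2 * a) powr \<beta>"], safe)
    fix y assume "y \<in> U"
    have "0 \<le> C * cmod (x - y) powr \<beta>" using C by simp
    then show "u y0 - C * (2 * a) powr \<beta> \<le> u y + C * cmod (x - y) powr \<beta>" using lb[OF \<open>y \<in> U\<close>] by linarith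
  qed
  have ne: "S x \<noteq> {}" for x unfolding S_def using U by auto
  have vU: "v x = u x" if "x \<in> U" for x
    unfolding v_def
  proof (rule cInf_eq_minimum)
    show "u x \<in> S x" unfolding S_def using that bet by (auto intro!: image_eqI[of _ _ x])
    fix s assume "s \<in> S x"
    then obtain y where y: "y \<in> U" "s = u y + C * cmod (x - y) powr \<beta>" unfolding S_def by auto
    show "u x \<le> s" using hol[OF that y(1)] y(2) by linarith
  qed
  have le: "v x \<le> v x' + C * cmod (x - x') powr \<beta>" for x x'
  proof -
    have "v x - C * cmod (x - x') powr \<beta> \<le> v x'"
      unfolding v_def[of x']
    proof (rule cInf_greatest[OF ne])
      fix s assume "s \<in> S x'"
      then obtain y where y: "y \<in> U" "s = u y + C * cmod (x' - y) powr \<beta>" unfolding S_def by auto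
      have "v x \<le> u y + C * cmod (x - y) powr \<beta>"
        unfolding v_def by (rule cInf_lower[OF _ bdd]) (use y in \<open>auto simp: S_def\<close>)
      also have "cmod (x - y) powr \<beta> \<le> cmod (x - x') powr \<beta> + cmod (x' - y) powr \<beta>"
      proof -
        have "cmod (x - y) \<le> cmod (x - x') + cmod (x' - y)" using norm_triangle_ineq[of "x - x'" "x' - y"] by simp
        then have "cmod (x - y) powr \<beta> \<le> (cmod (x - x') + cmod (x' - y)) powr \<beta>"
          using bet by (intro powr_mono2) auto
        also have "\<dots> \<le> cmod (x - x') powr \<beta> + cmod (x' - y) powr \<beta>"
          using bet by (intro powr_subadd) auto
        finally show ?thesis .
      qed
      then have "u y + C * cmod (x - y) powr \<beta> \<le> u y + C * (cmod (x - x') powr \<beta> + cmod (x' - y) powr \<beta>)"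
        using C by (intro add_left_mono mult_left_mono) auto
      finally show "v x - C * cmod (x - x') powr \<beta> \<le> s" using y(2) by (simp add: algebra_simps)
    qed
    then show ?thesis by linarith
  qed
  have "\<bar>v x - v y\<bar> \<le> C * cmod (x - y) powr \<beta>" for x y
    using le[of x y] le[of y x] by (simp add: norm_minus_commute abs_le_iff)
  then show ?thesis using vU by blast
qed

lemma lip_holder:
  fixes d t \<beta> :: real
  assumes "\<bar>d\<bar> \<le> t" "\<bar>d\<bar> \<le> 1" "0 < \<beta>" "\<beta> \<le> 1"
  shows "\<bar>d\<bar> \<le> t powr \<beta>"
proof (cases "t \<le> 1")
  case True
  have t0: "0 \<le> t" using assms(1) by linarith
  have "t powr 1 \<le> t powr \<beta>" by (rule powr_mono'[OF assms(4) t0 True])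
  then show ?thesis using assms(1) t0 by simp
next
  case False
  then have "1 \<le> t powr \<beta>" using assms by (intro ge_one_powr_ge_zero) auto
  then show ?thesis using assms(2) by linarith
qed

lemma holder_ext_complex:
  fixes H :: "complex \<Rightarrow> complex"
  assumes U: "U \<noteq> {}" "bounded U" and hol: "holder_on \<beta> U H" and bet: "0 < \<beta>" "\<beta> \<le> 1"
  shows "\<exists>F C R M. dbar_data F C \<beta> R M \<and> (\<forall>z\<in>U. F z = H z)"
proof -
  obtain C0 where C0: "\<And>x y. x \<in> U \<Longrightarrow> y \<in> U \<Longrightarrow> cmod (H x - H y) \<le> C0 * cmod (x - y) powr \<beta>"
    using hol unfolding holder_on_def by blast
  define C where "C = max C0 0"
  have C: "0 \<le> C" unfolding C_def by simp
  have hC: "cmod (H x - H y) \<le> C * cmod (x - y) powr \<beta>" if "x \<in> U" "y \<in> U" for x y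
  proof -
    have "C0 * cmod (x - y) powr \<beta> \<le> C * cmod (x - y) powr \<beta>"
      unfolding C_def by (intro mult_right_mono) auto
    then show ?thesis using C0[OF that] by linarith
  qed
  have hRe: "\<bar>Re (H x) - Re (H y)\<bar> \<le> C * cmod (x - y) powr \<beta>" if "x \<in> U" "y \<in> U" for x y
    using abs_Re_le_cmod[of "H x - H y"] hC[OF that] by simp
  have hIm: "\<bar>Im (H x) - Im (H y)\<bar> \<le> C * cmod (x - y) powr \<beta>" if "x \<in> U" "y \<in> U" for x y
    using abs_Im_le_cmod[of "H x - H y"] hC[OF that] by simp
  obtain ue where ue: "\<forall>x\<in>U. ue x = Re (H x)" "\<forall>x y. \<bar>ue x - ue y\<bar> \<le> C * cmod (x - y) powr \<beta>"
    using holder_ext_real[OF U hRe bet C] by blast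
  obtain ve where ve: "\<forall>x\<in>U. ve x = Im (H x)" "\<forall>x y. \<bar>ve x - ve y\<bar> \<le> C * cmod (x - y) powr \<beta>"
    using holder_ext_real[OF U hIm bet C] by blast
  define F0 where "F0 z = Complex (ue z) (ve z)" for z
  have F0U: "F0 z = H z" if "z \<in> U" for z
    using ue(1) ve(1) that unfolding F0_def by (simp add: complex_eq_iff)
  have F0h: "cmod (F0 x - F0 y) \<le> 2 * C * cmod (x - y) powr \<beta>" for x y
  proof -
    have "cmod (F0 x - F0 y) \<le> \<bar>Re (F0 x - F0 y)\<bar> + \<bar>Im (F0 x - F0 y)\<bar>" by (rule cmod_le)
    also have "\<dots> = \<bar>ue x - ue y\<bar> + \<bar>ve x - ve y\<bar>" unfolding F0_def by simp
    also have "\<dots> \<le> 2 * C * cmod (x - y) powr \<beta>" using ue(2)[rule_format, of x y] ve(2)[rule_format, of x y] by simp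
    finally show ?thesis .
  qed
  obtain R0 where R0: "R0 > 0" "\<And>x. x \<in> U \<Longrightarrow> cmod x \<le> R0" using U(2) unfolding bounded_pos by blast
  obtain y0 where y0: "y0 \<in> U" using U by blast
  define M0 where "M0 = cmod (F0 y0) + 2 * C * (2 * R0 + 1) powr \<beta>"
  have M0: "0 \<le> M0" unfolding M0_def using C by simp
  have F0b: "cmod (F0 z) \<le> M0" if "cmod z \<le> R0 + 1" for z
  proof -
    have "cmod (z - y0) \<le> 2 * R0 + 1" using norm_triangle_ineq4[of z y0] R0(2)[OF y0] that by linarith
    then have "2 * C * cmod (z - y0) powr \<beta> \<le> 2 * C * (2 * R0 + 1) powr \<beta>"
      using C bet by (intro mult_left_mono powr_mono2) auto
    moreover have "cmod (F0 z) \<le> cmod (F0 y0) + cmod (F0 z - F0 y0)" by (rule norm_triangle_sub)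
    ultimately show ?thesis using F0h[of z y0] unfolding M0_def by linarith
  qed
  define cf where "cf z = max 0 (min 1 (R0 + 1 - cmod z))" for z
  have cf01: "0 \<le> cf z" "cf z \<le> 1" for z unfolding cf_def by auto
  have cfout: "cf z = 0" if "R0 + 1 \<le> cmod z" for z using that unfolding cf_def by auto
  have cfin: "cf z = 1" if "cmod z \<le> R0" for z using that unfolding cf_def by auto
  have cfl: "\<bar>cf x - cf y\<bar> \<le> cmod (x - y) powr \<beta>" for x y
  proof (rule lip_holder[OF _ _ bet])
    have "\<bar>cf x - cf y\<bar> \<le> \<bar>cmod x - cmod y\<bar>" unfolding cf_def by (simp add: abs_le_iff) linarith?
    also have "\<dots> \<le> cmod (x - y)" by (rule norm_triangle_ineq3)
    finally show "\<bar>cf x - cf y\<bar> \<le> cmod (x - y)" .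
    show "\<bar>cf x - cf y\<bar> \<le> 1" using cf01[of x] cf01[of y] by linarith
  qed
  define F where "F z = of_real (cf z) * F0 z" for z
  have "dbar_data F (2 * C + M0) \<beta> (R0 + 1) M0"
  proof
    fix x y
    let ?t = "cmod (x - y) powr \<beta>"
    have t0: "0 \<le> ?t" by simp
    have ch: "cmod (of_real (cf x - cf y) :: complex) \<le> ?t" unfolding norm_of_real using cfl[of x y] .
    show "cmod (F x - F y) \<le> (2 * C + M0) * ?t"
    proof (cases "cmod y < R0 + 1")
      case True
      have "F x - F y = of_real (cf x) * (F0 x - F0 y) + of_real (cf x - cf y) * F0 y"
        unfolding F_def by (simp add: algebra_simps)
      then have "cmod (F x - F y) \<le> cf x * cmod (F0 x - F0 y) + cmod (of_real (cf x - cf y) :: complex) * cmod (F0 y)"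
        using cf01[of x] by (metis abs_of_nonneg norm_mult norm_of_real norm_triangle_ineq)
      also have "\<dots> \<le> 1 * (2 * C * ?t) + ?t * M0"
        using cf01[of x] F0h[of x y] ch F0b[of y] True C M0
        by (intro add_mono mult_mono) auto
      finally show ?thesis by (simp add: algebra_simps)
    next
      case False
      show ?thesis
      proof (cases "cmod x < R0 + 1")
        case True
        have "F x - F y = of_real (cf y) * (F0 x - F0 y) + of_real (cf x - cf y) * F0 x"
          unfolding F_def by (simp add: algebra_simps)
        then have "cmod (F x - F y) \<le> cf y * cmod (F0 x - F0 y) + cmod (of_real (cf x - cf y) :: complex) * cmod (F0 x)"
          using cf01[of y] by (metis abs_of_nonneg norm_mult norm_of_real norm_triangle_ineq)
        also have "\<dots> \<le> 1 * (2 * C * ?t) + ?t * M0"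
          using cf01[of y] F0h[of x y] ch F0b[of x] True C M0
          by (intro add_mono mult_mono) auto
        finally show ?thesis by (simp add: algebra_simps)
      next
        case False2: False
        have "F x = 0" "F y = 0" using cfout False False2 unfolding F_def by auto
        then show ?thesis using C M0 by simp
      qed
    qed
  next
    fix z :: complex assume "R0 + 1 \<le> cmod z"
    then show "F z = 0" unfolding F_def using cfout by simp
  next
    fix z
    show "cmod (F z) \<le> M0"
    proof (cases "cmod z \<le> R0 + 1")
      case True
      have "cmod (F z) = cf z * cmod (F0 z)" unfolding F_def using cf01[of z] by (simp add: norm_mult)
      also have "\<dots> \<le> 1 * M0" using cf01[of z] F0b[OF True] by (intro mult_mono) auto
      finally show ?thesis by simp
    next
      case False then show ?thesis unfolding F_def using cfout[of z] M0 by simp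
    qed
  qed (use bet C M0 R0 in auto)
  moreover have "\<forall>z\<in>U. F z = H z" unfolding F_def using cfin R0(2) F0U by simp
  ultimately show ?thesis by blast
qed

lemma wirt:
  assumes "(f has_derivative (\<lambda>v. \<alpha> * v + \<beta> * cnj v)) (at z)"
  shows "dx f z = \<alpha> + \<beta>" "dy f z = \<i> * \<alpha> - \<i> * \<beta>" "dz f z = \<alpha>" "dzbar f z = \<beta>"
proof -
  have fd: "frechet_derivative f (at z) = (\<lambda>v. \<alpha> * v + \<beta> * cnj v)"
    using frechet_derivative_at[OF assms] by simp
  show 1: "dx f z = \<alpha> + \<beta>" unfolding dx_def fd by simp
  show 2: "dy f z = \<i> * \<alpha> - \<i> * \<beta>" unfolding dy_def fd by simp
  show "dz f z = \<alpha>" unfolding dz_def 1 2 by (simp add: algebra_simps)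
  show "dzbar f z = \<beta>" unfolding dzbar_def 1 2 by (simp add: algebra_simps)
qed

lemma C1_on_subset: "C1_on S f \<Longrightarrow> T \<subseteq> S \<Longrightarrow> C1_on T f"
  unfolding C1_on_def by (auto intro: continuous_on_subset)

context dbar_data
begin

lemma dbar_sol_F: "\<exists>\<phi>. C1_on UNIV \<phi> \<and> (\<forall>z. \<phi> z \<noteq> 0) \<and> (\<forall>z. dzbar \<phi> z = F z * \<phi> z)"
proof -
  obtain g A where Ac: "continuous_on UNIV A"
    and gd: "\<And>z. (g has_derivative (\<lambda>v. A z * v - of_real c0 * F z * cnj v)) (at z)"
    using dbar_main by blast
  define c where "c = - 1 / (of_real c0 :: complex)"
  have cc: "c * of_real c0 = -1" unfolding c_def using c0_pos by simp
  define \<phi> where "\<phi> z = exp (c * g z)" for z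
  have pd: "(\<phi> has_derivative (\<lambda>v. (\<phi> z * c * A z) * v + (\<phi> z * F z) * cnj v)) (at z)" for z
  proof -
    have "((\<lambda>x. c * g x) has_derivative (\<lambda>v. c * (A z * v - of_real c0 * F z * cnj v))) (at z)"
      by (rule has_derivative_mult_right[OF gd])
    from has_derivative_compose[OF this DERIV_exp[unfolded has_field_derivative_def]]
    have "(\<phi> has_derivative (\<lambda>v. exp (c * g z) * (c * (A z * v - of_real c0 * F z * cnj v)))) (at z)"
      unfolding \<phi>_def .
    moreover have "(\<lambda>v. exp (c * g z) * (c * (A z * v - of_real c0 * F z * cnj v)))
        = (\<lambda>v. (\<phi> z * c * A z) * v + (\<phi> z * F z) * cnj v)"
    proof (rule ext)
      fix v
      have "exp (c * g z) * (c * (A z * v - of_real c0 * F z * cnj v))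
          = \<phi> z * c * A z * v - \<phi> z * (c * of_real c0) * F z * cnj v"
        unfolding \<phi>_def by (simp add: algebra_simps)
      also have "\<dots> = (\<phi> z * c * A z) * v + (\<phi> z * F z) * cnj v" unfolding cc by simp
      finally show "exp (c * g z) * (c * (A z * v - of_real c0 * F z * cnj v)) = (\<phi> z * c * A z) * v + (\<phi> z * F z) * cnj v" .
    qed
    ultimately show ?thesis by simp
  qed
  have pc: "continuous_on UNIV \<phi>"
    by (rule continuous_at_imp_continuous_on) (use pd has_derivative_continuous in blast)
  have "dx \<phi> = (\<lambda>z. \<phi> z * c * A z + \<phi> z * F z)" by (rule ext) (rule wirt(1)[OF pd])
  moreover have "dy \<phi> = (\<lambda>z. \<i> * (\<phi> z * c * A z) - \<i> * (\<phi> z * F z))" by (rule ext) (rule wirt(2)[OF pd])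
  ultimately have "C1_on UNIV \<phi>"
    unfolding C1_on_def using pd Fcont Ac pc
    by (auto intro!: continuous_intros simp: differentiable_def)
  moreover have "\<forall>z. \<phi> z \<noteq> 0" unfolding \<phi>_def by simp
  moreover have "\<forall>z. dzbar \<phi> z = F z * \<phi> z" using wirt(4)[OF pd] by (simp add: mult.commute)
  ultimately show ?thesis by blast
qed

end

lemma dbar_solve:
  fixes H :: "complex \<Rightarrow> complex"
  assumes "U \<noteq> {}" "bounded U" "holder_on \<beta> U H" "0 < \<beta>" "\<beta> \<le> 1"
  shows "\<exists>\<phi>. C1_on U \<phi> \<and> (\<forall>z\<in>U. \<phi> z \<noteq> 0) \<and> (\<forall>z\<in>U. dzbar \<phi> z = H z * \<phi> z)"
proof -
  obtain F C R M where D: "dbar_data F C \<beta> R M" and FU: "\<forall>z\<in>U. F z = H z"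
    using holder_ext_complex[OF assms] by blast
  obtain \<phi> where p: "C1_on UNIV \<phi>" "\<forall>z. \<phi> z \<noteq> 0" "\<forall>z. dzbar \<phi> z = F z * \<phi> z"
    using dbar_data.dbar_sol_F[OF D] by blast
  show ?thesis
    using C1_on_subset[OF p(1)] p(2,3) FU by (intro exI[of _ \<phi>]) auto
qed

lemma deriv_wirt:
  assumes "f differentiable (at z)"
  shows "(f has_derivative (\<lambda>v. dz f z * v + dzbar f z * cnj v)) (at z)"
proof -
  let ?L = "frechet_derivative f (at z)"
  have d: "(f has_derivative ?L) (at z)" using assms frechet_derivative_works by blast
  have lin: "linear ?L" using d has_derivative_linear by blast
  have "?L v = dz f z * v + dzbar f z * cnj v" for v
  proof -
    have v: "v = Re v *\<^sub>R 1 + Im v *\<^sub>R \<i>" by (simp add: complex_eq_iff)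
    have "?L v = Re v *\<^sub>R ?L 1 + Im v *\<^sub>R ?L \<i>"
      by (subst v) (simp add: linear_add[OF lin] linear_scale[OF lin])
    also have "\<dots> = dz f z * v + dzbar f z * cnj v"
      unfolding dz_def dzbar_def dx_def dy_def
      by (subst (3 4) v) (simp add: scaleR_conv_of_real field_simps)
    finally show ?thesis .
  qed
  then have "?L = (\<lambda>v. dz f z * v + dzbar f z * cnj v)" by (rule ext)
  then show ?thesis using d by simp
qed

lemma dz_cont:
  assumes "C1_on S f" shows "continuous_on S (dz f)"
proof -
  have "dz f = (\<lambda>z. (dx f z - \<i> * dy f z) / 2)" by (rule ext) (simp add: dz_def)
  then show ?thesis using assms unfolding C1_on_def by (auto intro!: continuous_intros)
qed

lemma C1_cont:
  assumes "C1_on S f" shows "continuous_on S f"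
  using assms unfolding C1_on_def
  by (intro continuous_at_imp_continuous_on) (auto intro: differentiable_imp_continuous_within)

lemma inv_deriv_rel:
  assumes opn: "open \<Omega>" and z: "z \<in> \<Omega>"
    and Pd: "\<Phi> differentiable (at z)"
    and Qd: "\<Psi> differentiable (at (\<Phi> z))"
    and inv: "\<And>x. x \<in> \<Omega> \<Longrightarrow> \<Psi> (\<Phi> x) = x"
    and mu: "dzbar \<Phi> z = m * dz \<Phi> z" and m: "cmod m < 1"
  shows "dz \<Phi> z \<noteq> 0" "jac \<Phi> z > 0" "cnj (dz \<Psi> (\<Phi> z)) = dz \<Phi> z / of_real (jac \<Phi> z)"
proof -
  define a b p q where "a = dz \<Phi> z" and "b = dzbar \<Phi> z" and "p = dz \<Psi> (\<Phi> z)" and "q = dzbar \<Psi> (\<Phi> z)"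
  have D1: "(\<Phi> has_derivative (\<lambda>v. a * v + b * cnj v)) (at z)" unfolding a_def b_def by (rule deriv_wirt[OF Pd])
  have D2: "(\<Psi> has_derivative (\<lambda>v. p * v + q * cnj v)) (at (\<Phi> z))" unfolding p_def q_def by (rule deriv_wirt[OF Qd])
  have C: "((\<lambda>x. \<Psi> (\<Phi> x)) has_derivative (\<lambda>v. p * (a * v + b * cnj v) + q * cnj (a * v + b * cnj v))) (at z)"
    using has_derivative_compose[OF D1 D2] by simp
  have I: "((\<lambda>x. \<Psi> (\<Phi> x)) has_derivative (\<lambda>v. v)) (at z)"
    by (rule has_derivative_transform_within_open[OF has_derivative_ident opn z]) (simp add: inv)
  have E: "(\<lambda>v. p * (a * v + b * cnj v) + q * cnj (a * v + b * cnj v)) = (\<lambda>v. v)"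
    using has_derivative_unique[OF C I] .
  have e1: "p * (a + b) + q * (cnj a + cnj b) = 1" using fun_cong[OF E, of 1] by simp
  have e2: "p * (\<i> * a - \<i> * b) + q * (- \<i> * cnj a + \<i> * cnj b) = \<i>"
    using fun_cong[OF E, of \<i>] by (simp add: algebra_simps)
  have e3: "p * (a - b) + q * (cnj b - cnj a) = 1"
  proof -
    have "p * (\<i> * a - \<i> * b) + q * (- \<i> * cnj a + \<i> * cnj b) = \<i> * (p * (a - b) + q * (cnj b - cnj a))"
      by (simp add: algebra_simps)
    with e2 show ?thesis by simp
  qed
  have E1: "p * a + q * cnj b = 1"
  proof -
    have "p * a + q * cnj b = ((p * (a + b) + q * (cnj a + cnj b)) + (p * (a - b) + q * (cnj b - cnj a))) / 2"
      by (simp add: field_simps)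
    also have "\<dots> = 1" unfolding e1 e3 by simp
    finally show ?thesis .
  qed
  have E2: "p * b + q * cnj a = 0"
  proof -
    have "p * b + q * cnj a = ((p * (a + b) + q * (cnj a + cnj b)) - (p * (a - b) + q * (cnj b - cnj a))) / 2"
      by (simp add: field_simps)
    also have "\<dots> = 0" unfolding e1 e3 by simp
    finally show ?thesis .
  qed
  have bm: "b = m * a" unfolding a_def b_def by (rule mu)
  show a0: "dz \<Phi> z \<noteq> 0"
  proof
    assume "dz \<Phi> z = 0"
    then have "a = 0" "b = 0" using bm unfolding a_def by auto
    then show False using E1 by simp
  qed
  have J: "jac \<Phi> z = (cmod a)\<^sup>2 * (1 - (cmod m)\<^sup>2)"
    unfolding jac_def a_def[symmetric] b_def[symmetric] bm by (simp add: norm_mult power_mult_distrib algebra_simps)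
  have "(cmod m)\<^sup>2 < 1" using m by (simp add: power_less_one_iff abs_square_less_1)
  moreover have "cmod a > 0" using a0 unfolding a_def by simp
  ultimately show Jp: "jac \<Phi> z > 0" unfolding J by simp
  have Jc: "of_real (jac \<Phi> z) = a * cnj a - b * cnj b"
    unfolding jac_def a_def[symmetric] b_def[symmetric] of_real_diff complex_norm_square ..
  have "p * (a * cnj a - b * cnj b) = cnj a"
  proof -
    have "p * (a * cnj a - b * cnj b) = (p * a + q * cnj b) * cnj a - (p * b + q * cnj a) * cnj b"
      by (simp add: algebra_simps)
    then show ?thesis using E1 E2 by simp
  qed
  then have "p = cnj a / of_real (jac \<Phi> z)" using Jp unfolding Jc[symmetric]
    by (simp add: field_simps)
  then show "cnj (dz \<Psi> (\<Phi> z)) = dz \<Phi> z / of_real (jac \<Phi> z)"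
    unfolding p_def[symmetric] a_def[symmetric] by simp
qed

lemma open_image_diffeo:
  assumes opn: "open \<Omega>" and Pc: "continuous_on \<Omega> \<Phi>"
    and Pd: "\<And>z. z \<in> \<Omega> \<Longrightarrow> \<Phi> differentiable (at z)"
    and J: "\<And>z. z \<in> \<Omega> \<Longrightarrow> jac \<Phi> z > 0"
  shows "open (\<Phi> ` \<Omega>)"
proof -
  have "\<Phi> z \<in> interior (\<Phi> ` \<Omega>)" if z: "z \<in> \<Omega>" for z
  proof -
    define a b where "a = dz \<Phi> z" and "b = dzbar \<Phi> z"
    have D: "(\<Phi> has_derivative (\<lambda>v. a * v + b * cnj v)) (at z)"
      unfolding a_def b_def by (rule deriv_wirt[OF Pd[OF z]])
    have Jc: "of_real (jac \<Phi> z) = a * cnj a - b * cnj b"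
      unfolding jac_def a_def[symmetric] b_def[symmetric] of_real_diff complex_norm_square ..
    have J0: "(of_real (jac \<Phi> z) :: complex) \<noteq> 0" using J[OF z] by simp
    define g' where "g' w = (cnj a * w - b * cnj w) / of_real (jac \<Phi> z)" for w
    have g'e: "g' = (\<lambda>w. (cnj a / of_real (jac \<Phi> z)) * w + (- b / of_real (jac \<Phi> z)) * cnj w)"
      by (rule ext) (simp add: g'_def diff_divide_distrib)
    have bl: "bounded_linear g'"
      unfolding g'e
      by (rule bounded_linear_add[OF bounded_linear_mult_right
            bounded_linear_compose[OF bounded_linear_mult_right bounded_linear_cnj]])
    have id: "(\<lambda>v. a * v + b * cnj v) \<circ> g' = id"
    proof (rule ext)
      fix w
      have "a * g' w + b * cnj (g' w) = (a * (cnj a * w - b * cnj w) + b * (a * cnj w - cnj b * w)) / of_real (jac \<Phi> z)"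
        unfolding g'_def by (simp add: add_divide_distrib)
      also have "\<dots> = (a * cnj a - b * cnj b) * w / of_real (jac \<Phi> z)" by (simp add: algebra_simps)
      also have "\<dots> = w" unfolding Jc[symmetric] using J0 by simp
      finally show "((\<lambda>v. a * v + b * cnj v) \<circ> g') w = id w" by simp
    qed
    show ?thesis
      by (rule sussmann_open_mapping[OF opn Pc z D bl id subset_refl]) (simp add: interior_open[OF opn] z)
  qed
  then have "\<Phi> ` \<Omega> \<subseteq> interior (\<Phi> ` \<Omega>)" by blast
  then have "interior (\<Phi> ` \<Omega>) = \<Phi> ` \<Omega>" using interior_subset by blast
  then show ?thesis by (metis open_interior)
qed

theorem corollary6p5:
  fixes \<Omega> :: "complex set" and \<mu> A B F \<Phi> :: "complex \<Rightarrow> complex" and \<alpha> :: real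
  assumes "domain \<Omega>" and "bounded \<Omega>"
    and "BV \<Omega> (\<mu>, A, B, F)"
    and "0 < \<alpha>" and "\<alpha> < 1"
    and "C1a_on \<alpha> \<Omega> \<mu>"
    and "\<exists>k<1. \<forall>z\<in>\<Omega>. cmod (\<mu> z) \<le> k"
    and "inj_on \<Phi> \<Omega>"
    and "C2a_on \<alpha> \<Omega> \<Phi>"
    and "C1_on (\<Phi> ` \<Omega>) (inv_into \<Omega> \<Phi>)"
    and "\<forall>z\<in>\<Omega>. dzbar \<Phi> z = \<mu> z * dz \<Phi> z"
    and "bounded (\<Phi> ` \<Omega>)"
    and "\<exists>\<beta>>0. \<beta> \<le> 1 \<and> holder_on \<beta> (\<Phi> ` \<Omega>)
           (\<lambda>\<zeta>. cnj (dz (inv_into \<Omega> \<Phi>) \<zeta>) * A (inv_into \<Omega> \<Phi> \<zeta>))"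
  shows "\<exists>B' F'. BV (\<Phi> ` \<Omega>) (\<lambda>_. 0, \<lambda>_. 0, B', F') \<and>
           gd_equiv (\<Omega>, (\<mu>, A, B, F)) (\<Phi> ` \<Omega>, (\<lambda>_. 0, \<lambda>_. 0, B', F'))"
proof -
  note dom = assms(1) and bv = assms(3) and inj = assms(8) and c2a = assms(9)
    and c1i = assms(10) and bel = assms(11) and hol = assms(13)
  define \<Psi> where "\<Psi> = inv_into \<Omega> \<Phi>"
  define \<Omega>' where "\<Omega>' = \<Phi> ` \<Omega>"
  have opn: "open \<Omega>" and conn: "connected \<Omega>" and ne: "\<Omega> \<noteq> {}"
    using dom unfolding domain_def by auto
  have c1: "C1_on \<Omega> \<Phi>" using c2a unfolding C2a_on_def C2_on_def by blast
  have Pd: "\<Phi> differentiable (at z)" if "z \<in> \<Omega>" for z using c1 that unfolding C1_on_def by blast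
  have Pc: "continuous_on \<Omega> \<Phi>" by (rule C1_cont[OF c1])
  have inv: "\<Psi> (\<Phi> x) = x" if "x \<in> \<Omega>" for x unfolding \<Psi>_def using inv_into_f_f[OF inj that] .
  have c1i': "C1_on \<Omega>' \<Psi>" using c1i unfolding \<Psi>_def \<Omega>'_def .
  have Qd: "\<Psi> differentiable (at (\<Phi> z))" if "z \<in> \<Omega>" for z
    using c1i' that unfolding C1_on_def \<Omega>'_def by blast
  have mu_lt: "cmod (\<mu> z) < 1" if "z \<in> \<Omega>" for z using bv that unfolding BV_def by auto
  have rel: "dz \<Phi> z \<noteq> 0 \<and> jac \<Phi> z > 0 \<and> cnj (dz \<Psi> (\<Phi> z)) = dz \<Phi> z / of_real (jac \<Phi> z)"
    if z: "z \<in> \<Omega>" for z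
    using inv_deriv_rel[OF opn z Pd[OF z] Qd[OF z] inv _ mu_lt[OF z]] bel z by blast
  have open': "open \<Omega>'" unfolding \<Omega>'_def
    by (rule open_image_diffeo[OF opn Pc Pd]) (use rel in auto)
  have dom': "domain \<Omega>'"
    unfolding domain_def \<Omega>'_def using open' connected_continuous_image[OF Pc conn] ne
    by (auto simp: \<Omega>'_def)
  have Qc: "continuous_on \<Omega>' \<Psi>" by (rule C1_cont[OF c1i'])
  have Qimg: "\<Psi> ` \<Omega>' \<subseteq> \<Omega>" unfolding \<Omega>'_def using inv by auto
  have dzQ: "continuous_on \<Omega>' (dz \<Psi>)" by (rule dz_cont[OF c1i'])
  define tr where "tr X \<zeta> = cnj (dz \<Psi> \<zeta>) * X (\<Psi> \<zeta>)" for X :: "complex \<Rightarrow> complex" and \<zeta>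
  have cont_tr: "continuous_on \<Omega>' (tr X)" if "continuous_on \<Omega> X" for X
    unfolding tr_def
    by (intro continuous_intros dzQ continuous_on_compose2[OF that Qc Qimg])
  have cA: "continuous_on \<Omega> A" and cB: "continuous_on \<Omega> B" and cF: "continuous_on \<Omega> F"
    using bv unfolding BV_def by auto
  define D1 where "D1 = ((\<lambda>_::complex. 0::complex), tr A, tr B, tr F)"
  have bv1: "BV \<Omega>' D1" unfolding D1_def BV_def using cont_tr[OF cA] cont_tr[OF cB] cont_tr[OF cF] by simp
  have trz: "tr X (\<Phi> z) = dz \<Phi> z / of_real (jac \<Phi> z) * X z" if "z \<in> \<Omega>" for X z
    unfolding tr_def using rel[OF that] inv[OF that] by simp
  have pb: "eq_on \<Omega> (\<mu>, A, B, F) (pullback \<Phi> D1)"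
    unfolding eq_on_def pullback_def D1_def Let_def
  proof (simp only: prod.case, intro ballI conjI)
    fix z assume z: "z \<in> \<Omega>"
    have a0: "dz \<Phi> z \<noteq> 0" and J: "jac \<Phi> z > 0" using rel[OF z] by auto
    show "\<mu> z = (dzbar \<Phi> z + 0 * cnj (dz \<Phi> z)) / (dz \<Phi> z + 0 * cnj (dzbar \<Phi> z))"
      using bel z a0 by simp
    show "A z = of_real (jac \<Phi> z) * tr A (\<Phi> z) / (dz \<Phi> z + 0 * cnj (dzbar \<Phi> z))"
      unfolding trz[OF z] using a0 J by (simp add: field_simps)
    show "B z = of_real (jac \<Phi> z) * tr B (\<Phi> z) / (dz \<Phi> z + 0 * cnj (dzbar \<Phi> z))"
      unfolding trz[OF z] using a0 J by (simp add: field_simps)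
    show "F z = of_real (jac \<Phi> z) * tr F (\<Phi> z) / (dz \<Phi> z + 0 * cnj (dzbar \<Phi> z))"
      unfolding trz[OF z] using a0 J by (simp add: field_simps)
  qed
  have adm: "admissible_diffeo \<Omega> \<Omega>' \<Phi>"
    unfolding admissible_diffeo_def \<Omega>'_def
    using inj_on_imp_bij_betw[OF inj] c1 c1i rel by auto
  have step1: "gd_step (\<Omega>, (\<mu>, A, B, F)) (\<Omega>', D1)"
    unfolding gd_step_def using dom dom' bv bv1 adm pb by (auto simp: diff_rel_def)
  obtain \<beta> where b: "\<beta> > 0" "\<beta> \<le> 1" and hb: "holder_on \<beta> \<Omega>' (tr A)"
    using hol unfolding tr_def \<Psi>_def \<Omega>'_def by blast
  have ne': "\<Omega>' \<noteq> {}" using ne unfolding \<Omega>'_def by simp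
  have bd': "bounded \<Omega>'" using assms(12) unfolding \<Omega>'_def .
  obtain \<phi> where phi: "C1_on \<Omega>' \<phi>" "\<forall>z\<in>\<Omega>'. \<phi> z \<noteq> 0" "\<forall>z\<in>\<Omega>'. dzbar \<phi> z = tr A z * \<phi> z"
    using dbar_solve[OF ne' bd' hb b] by blast
  have pc: "continuous_on \<Omega>' \<phi>" by (rule C1_cont[OF phi(1)])
  define B'' where "B'' z = tr B z * \<phi> z / cnj (\<phi> z)" for z
  define F'' where "F'' z = \<phi> z * tr F z" for z
  have bv2: "BV \<Omega>' (\<lambda>_. 0, \<lambda>_. 0, B'', F'')"
    unfolding BV_def B''_def F''_def using phi(2)
    by (auto intro!: continuous_intros cont_tr cA cB cF pc)
  have step2: "gd_step (\<Omega>', D1) (\<Omega>', (\<lambda>_. 0, \<lambda>_. 0, B'', F''))"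
  proof -
    have "eq_on \<Omega>' (gauge_act \<phi> D1) (\<lambda>_. 0, \<lambda>_. 0, B'', F'')"
      unfolding eq_on_def gauge_act_def D1_def B''_def F''_def
      using phi(2,3) by simp
    then have "gauge_rel \<Omega>' D1 (\<lambda>_. 0, \<lambda>_. 0, B'', F'')"
      unfolding gauge_rel_def using phi(1,2) by blast
    then show ?thesis unfolding gd_step_def using dom' bv1 bv2 by simp
  qed
  have "gd_equiv (\<Omega>, (\<mu>, A, B, F)) (\<Omega>', (\<lambda>_. 0, \<lambda>_. 0, B'', F''))"
    unfolding gd_equiv_def
    by (rule equivclp_trans[OF r_into_equivclp[of gd_step, OF step1] r_into_equivclp[of gd_step, OF step2]])
  then show ?thesis using bv2 unfolding \<Omega>'_def by blast
qed

end
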